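(* Let $\mathcal{X}=(X,d_X,\mu)$, $\mathcal{Y}=(Y,d_Y,\nu)$ be mm-spaces, $\lambda:\mathbb{R}_+\to\mathbb{R}$, $\rho>0$, $\epsilon\geq0$, and $D_\phi=\rho\,\mathrm{KL}$. Fix $\gamma\in\mathcal{M}_+(X\times Y)$. Then any $\pi\in\arg\min_\pi\big[\mathcal{F}(\pi,\gamma)+\epsilon\,\mathrm{KL}(\pi\otimes\gamma|(\mu\otimes\nu)^{\otimes2})\big]$ is a solution of $$\min_\pi\int c^\epsilon_\gamma(x,y)\,d\pi(x,y)+\rho\,m(\gamma)\mathrm{KL}(\pi_1|\mu)+\rho\,m(\gamma)\mathrm{KL}(\pi_2|\nu)+\epsilon\,m(\gamma)\mathrm{KL}(\pi|\mu\otimes\nu),$$ where $c^\epsilon_\gamma(x,y)=\int\lambda(|d_X(x,x')-d_Y(y,y')|)\,d\gamma(x',y')+\rho\int\log(\frac{d\gamma_1}{d\mu})d\gamma_1+\rho\int\log(\frac{d\gamma_2}{d\nu})d\gamma_2+\epsilon\int\log(\frac{d\gamma}{d(\mu\otimes\nu)})d\gamma$.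
   Context: An mm-space is a complete separable metric space with a positive (finite) Borel measure. $m(\alpha)$ is the total mass of $\alpha$, and $\pi_1,\pi_2$ (resp. $\gamma_1,\gamma_2$) are the marginals of $\pi$ (resp. $\gamma$). $\mathrm{KL}(\alpha|\beta)=\int\log(\frac{d\alpha}{d\beta})d\alpha-m(\alpha)+m(\beta)$ if $\alpha\ll\beta$, $+\infty$ otherwise. $(\mu\otimes\nu)^{\otimes2}=(\mu\otimes\nu)\otimes(\mu\otimes\nu)$. $\mathcal{F}(\pi,\gamma)=\int\lambda(|d_X(x,x')-d_Y(y,y')|)\,d\pi(x,y)\,d\gamma(x',y')+D_\phi(\pi_1\otimes\gamma_1|\mu\otimes\mu)+D_\phi(\pi_2\otimes\gamma_2|\nu\otimes\nu)$. *)

theory Defs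
  imports "HOL-Analysis.Analysis"
begin

text \<open>Extended integral of an extended-real valued function: positive part minus
  negative part (value in ereal; the Isabelle ereal convention is used when both
  parts are infinite).\<close>
definition eint :: "'a measure \<Rightarrow> ('a \<Rightarrow> ereal) \<Rightarrow> ereal" where
  "eint M f = enn2ereal (\<integral>\<^sup>+ x. e2ennreal (f x) \<partial>M)
              - enn2ereal (\<integral>\<^sup>+ x. e2ennreal (- f x) \<partial>M)"

definition mass :: "'a measure \<Rightarrow> real" where
  "mass M = measure M (space M)"

definition logint :: "'a measure \<Rightarrow> 'a measure \<Rightarrow> ereal" where
  "logint \<alpha> \<beta> = (if sets \<alpha> = sets \<beta> \<and> absolutely_continuous \<beta> \<alpha>
     then eint \<alpha> (\<lambda>x. ereal (ln (enn2real (RN_deriv \<beta> \<alpha> x)))) else \<infinity>)"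

definition KL :: "'a measure \<Rightarrow> 'a measure \<Rightarrow> ereal" where
  "KL \<alpha> \<beta> = (if sets \<alpha> = sets \<beta> \<and> absolutely_continuous \<beta> \<alpha>
     then logint \<alpha> \<beta> - ereal (mass \<alpha>) + ereal (mass \<beta>) else \<infinity>)"

definition marg1 :: "('a \<times> 'b) measure \<Rightarrow> 'a::topological_space measure" where
  "marg1 \<pi> = distr \<pi> borel fst"
definition marg2 :: "('a \<times> 'b) measure \<Rightarrow> 'b::topological_space measure" where
  "marg2 \<pi> = distr \<pi> borel snd"

definition Mplus :: "'a::topological_space measure set" where
  "Mplus = {M. sets M = sets borel \<and> finite_measure M}"

definition GWF :: "('a::metric_space \<Rightarrow> 'a \<Rightarrow> real) \<Rightarrow> ('b::metric_space \<Rightarrow> 'b \<Rightarrow> real)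
   \<Rightarrow> 'a measure \<Rightarrow> 'b measure \<Rightarrow> (real \<Rightarrow> real) \<Rightarrow> real
   \<Rightarrow> ('a \<times> 'b) measure \<Rightarrow> ('a \<times> 'b) measure \<Rightarrow> ereal" where
  "GWF dX dY \<mu> \<nu> lam \<rho> \<pi> \<gamma> =
     eint (\<pi> \<Otimes>\<^sub>M \<gamma>) (\<lambda>((x,y),(x',y')). ereal (lam \<bar>dX x x' - dY y y'\<bar>))
     + ereal \<rho> * KL (marg1 \<pi> \<Otimes>\<^sub>M marg1 \<gamma>) (\<mu> \<Otimes>\<^sub>M \<mu>)
     + ereal \<rho> * KL (marg2 \<pi> \<Otimes>\<^sub>M marg2 \<gamma>) (\<nu> \<Otimes>\<^sub>M \<nu>)"

definition cost :: "('a::metric_space \<Rightarrow> 'a \<Rightarrow> real) \<Rightarrow> ('b::metric_space \<Rightarrow> 'b \<Rightarrow> real)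
   \<Rightarrow> 'a measure \<Rightarrow> 'b measure \<Rightarrow> (real \<Rightarrow> real) \<Rightarrow> real \<Rightarrow> real
   \<Rightarrow> ('a \<times> 'b) measure \<Rightarrow> 'a \<times> 'b \<Rightarrow> ereal" where
  "cost dX dY \<mu> \<nu> lam \<rho> \<epsilon> \<gamma> = (\<lambda>(x,y).
     eint \<gamma> (\<lambda>(x',y'). ereal (lam \<bar>dX x x' - dY y y'\<bar>))
     + ereal \<rho> * logint (marg1 \<gamma>) \<mu>
     + ereal \<rho> * logint (marg2 \<gamma>) \<nu>
     + ereal \<epsilon> * logint \<gamma> (\<mu> \<Otimes>\<^sub>M \<nu>))"

end

theory Submission
  imports Defs
begin


lemma ennreal_posneg_id:
  fixes u w :: real
  shows "ennreal (u+w) + ennreal (-u) + ennreal (-w) = ennreal (-(u+w)) + ennreal u + ennreal w"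
proof -
  have e: "\<And>t. ennreal t = ennreal (max t 0)" by (simp add: ennreal_neg max_def)
  have "ennreal (u+w) + ennreal (-u) + ennreal (-w) = ennreal (max (u+w) 0 + max (-u) 0 + max (-w) 0)"
    by (subst e, subst (2) e, subst (3) e) (simp add: ennreal_plus[symmetric] del: ennreal_plus)
  also have "max (u+w) 0 + max (-u) 0 + max (-w) 0 = max (-(u+w)) 0 + max u 0 + max w 0" by (simp add: max_def)
  also have "ennreal \<dots> = ennreal (-(u+w)) + ennreal u + ennreal w"
    by (subst e, subst (2) e, subst (3) e) (simp add: ennreal_plus[symmetric] del: ennreal_plus)
  finally show ?thesis .
qed

lemma ennreal_six:
  fixes A B C D E F :: ennreal
  assumes eq: "A + B + C = D + E + F" and "B \<noteq> \<infinity>" "C \<noteq> \<infinity>" "D \<noteq> \<infinity>"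
  shows "enn2ereal A - enn2ereal D = (enn2ereal E - enn2ereal B) + (enn2ereal F - enn2ereal C)"
proof -
  obtain b where b: "B = ennreal b" "b \<ge> 0" using assms(2) by (cases B rule: ennreal_cases) auto
  obtain c where c: "C = ennreal c" "c \<ge> 0" using assms(3) by (cases C rule: ennreal_cases) auto
  obtain d where d: "D = ennreal d" "d \<ge> 0" using assms(4) by (cases D rule: ennreal_cases) auto
  show ?thesis
  proof (cases "A = \<infinity>")
    case True
    have "ennreal d + E + F = \<infinity>" using eq True b c d by simp
    then have "E = \<infinity> \<or> F = \<infinity>" by simp
    then show ?thesis using True b c d by auto
  next
    case False
    then obtain a where a: "A = ennreal a" "a \<ge> 0" by (cases A rule: ennreal_cases) auto
    have "E \<noteq> \<infinity>" "F \<noteq> \<infinity>" using eq a b c d by (auto simp flip: ennreal_plus)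
    obtain e where e: "E = ennreal e" "e \<ge> 0" using \<open>E \<noteq> \<infinity>\<close> by (cases E rule: ennreal_cases) auto
    obtain f where f: "F = ennreal f" "f \<ge> 0" using \<open>F \<noteq> \<infinity>\<close> by (cases F rule: ennreal_cases) auto
    have "a + b + c = d + e + f" using eq a b c d e f
      by (simp flip: ennreal_plus add: ennreal_inj)
    then show ?thesis using a b c d e f by simp
  qed
qed

lemma eint_real: "eint M (\<lambda>x. ereal (u x)) =
   enn2ereal (\<integral>\<^sup>+x. ennreal (u x) \<partial>M) - enn2ereal (\<integral>\<^sup>+x. ennreal (- u x) \<partial>M)"
  by (simp add: eint_def)

lemma eint_add_real:
  fixes u w :: "'a \<Rightarrow> real"
  assumes [measurable]: "u \<in> borel_measurable M" "w \<in> borel_measurable M"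
    and fu: "(\<integral>\<^sup>+x. ennreal (- u x) \<partial>M) \<noteq> \<infinity>" and fw: "(\<integral>\<^sup>+x. ennreal (- w x) \<partial>M) \<noteq> \<infinity>"
  shows "eint M (\<lambda>x. ereal (u x + w x)) = eint M (\<lambda>x. ereal (u x)) + eint M (\<lambda>x. ereal (w x))"
proof -
  let ?A = "\<integral>\<^sup>+x. ennreal (u x + w x) \<partial>M" and ?D = "\<integral>\<^sup>+x. ennreal (-(u x + w x)) \<partial>M"
  let ?E = "\<integral>\<^sup>+x. ennreal (u x) \<partial>M" and ?B = "\<integral>\<^sup>+x. ennreal (- u x) \<partial>M"
  let ?F = "\<integral>\<^sup>+x. ennreal (w x) \<partial>M" and ?C = "\<integral>\<^sup>+x. ennreal (- w x) \<partial>M"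
  have "?A + ?B + ?C = \<integral>\<^sup>+x. ennreal (u x + w x) + ennreal (-u x) + ennreal (- w x) \<partial>M"
    by (simp add: nn_integral_add)
  also have "\<dots> = \<integral>\<^sup>+x. ennreal (-(u x + w x)) + ennreal (u x) + ennreal (w x) \<partial>M"
    by (simp only: ennreal_posneg_id)
  also have "\<dots> = ?D + ?E + ?F"
    by (simp add: nn_integral_add)
  finally have eq: "?A + ?B + ?C = ?D + ?E + ?F" .
  have "?D \<le> \<integral>\<^sup>+x. ennreal (-u x) + ennreal (- w x) \<partial>M"
  proof (intro nn_integral_mono)
    fix x
    have "ennreal (-(u x + w x)) \<le> ennreal (max (-u x) 0 + max (-w x) 0)"
      by (intro ennreal_leI) auto
    also have "\<dots> = ennreal (-u x) + ennreal (- w x)"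
      by (simp add: ennreal_plus[symmetric] ennreal_neg max_def del: ennreal_plus)
    finally show "ennreal (-(u x + w x)) \<le> ennreal (-u x) + ennreal (- w x)" .
  qed
  also have "\<dots> = ?B + ?C" by (simp add: nn_integral_add)
  finally have "?D \<noteq> \<infinity>" using fu fw by (auto simp: top_unique)
  with ennreal_six[OF eq fu fw] show ?thesis by (simp add: eint_def)
qed

lemma eint_null:
  assumes "emeasure M (space M) = 0"
  shows "eint M f = 0"
proof -
  have "\<And>g. (\<integral>\<^sup>+x. g x \<partial>M) = 0"
    using emeasure_0_AE[OF assms] by (subst nn_integral_cong_AE[where v="\<lambda>_. 0"]) auto
  then show ?thesis by (simp add: eint_def)
qed

lemma eint_mono_AE:
  assumes "AE x in M. u x \<le> v x"
  shows "eint M u \<le> eint M v"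
proof -
  have "(\<integral>\<^sup>+x. e2ennreal (u x) \<partial>M) \<le> (\<integral>\<^sup>+x. e2ennreal (v x) \<partial>M)"
    using assms by (intro nn_integral_mono_AE) (auto elim!: eventually_mono intro: e2ennreal_mono)
  moreover have "(\<integral>\<^sup>+x. e2ennreal (- v x) \<partial>M) \<le> (\<integral>\<^sup>+x. e2ennreal (- u x) \<partial>M)"
    using assms by (intro nn_integral_mono_AE) (auto elim!: eventually_mono intro: e2ennreal_mono)
  ultimately show ?thesis unfolding eint_def
    by (intro ereal_minus_mono) (auto simp: less_eq_ennreal.rep_eq)
qed

lemma eint_cong_AE:
  assumes "AE x in M. u x = v x"
  shows "eint M u = eint M v"
  using assms by (intro antisym eint_mono_AE) (auto elim!: eventually_mono)


lemma nn_density_real: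
  assumes f[measurable]: "f \<in> borel_measurable M" and fin: "AE x in M. f x \<noteq> \<infinity>"
    and u[measurable]: "u \<in> borel_measurable M"
  shows "(\<integral>\<^sup>+x. ennreal (u x) \<partial>density M f) = (\<integral>\<^sup>+x. ennreal (enn2real (f x) * u x) \<partial>M)"
proof -
  have "(\<integral>\<^sup>+x. ennreal (u x) \<partial>density M f) = (\<integral>\<^sup>+x. f x * ennreal (u x) \<partial>M)"
    by (simp add: nn_integral_density)
  also have "\<dots> = (\<integral>\<^sup>+x. ennreal (enn2real (f x) * u x) \<partial>M)"
  proof (intro nn_integral_cong_AE)
    show "AE x in M. f x * ennreal (u x) = ennreal (enn2real (f x) * u x)"
      using fin
    proof (eventually_elim)
      case (elim x)
      then have "f x = ennreal (enn2real (f x))" by (simp add: ennreal_enn2real_if)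
      then show ?case
        by (metis ennreal_mult'' enn2real_nonneg mult.commute)
    qed
  qed
  finally show ?thesis .
qed

lemma eint_density_real:
  assumes f[measurable]: "f \<in> borel_measurable M" and fin: "AE x in M. f x \<noteq> \<infinity>"
    and u[measurable]: "u \<in> borel_measurable M"
  shows "eint (density M f) (\<lambda>x. ereal (u x)) = eint M (\<lambda>x. ereal (enn2real (f x) * u x))"
proof -
  have 1: "(\<integral>\<^sup>+x. ennreal (- u x) \<partial>density M f) = (\<integral>\<^sup>+x. ennreal (- (enn2real (f x) * u x)) \<partial>M)"
    using nn_density_real[OF f fin, of "\<lambda>x. - u x"] by simp
  show ?thesis using nn_density_real[OF f fin u] 1 by (simp add: eint_def)
qed

lemma neg_xlnx_le_1: "(t::real) \<ge> 0 \<Longrightarrow> - (t * ln t) \<le> 1"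
proof (cases "t = 0")
  case False
  assume "t \<ge> 0"
  then have tp: "t > 0" using False by simp
  have "ln (1/t) \<le> 1/t - 1" using tp by (intro ln_le_minus_one) simp
  then have "- ln t \<le> 1/t - 1" using tp by (simp add: ln_div)
  then have "t * (- ln t) \<le> t * (1/t - 1)" using tp by (intro mult_left_mono) auto
  moreover have "t * (1/t - 1) = 1 - t" using tp by (simp add: field_simps)
  ultimately show ?thesis using tp by simp
qed simp

lemma enn_minus_not_minf: "(B::ennreal) \<noteq> \<infinity> \<Longrightarrow> enn2ereal A - enn2ereal B \<noteq> -\<infinity>"
  by (cases A rule: ennreal_cases; cases B rule: ennreal_cases) auto

locale acpair =
  fixes a c :: "'a measure"
  assumes fa: "finite_measure a" and fc: "finite_measure c"
    and sets_eq: "sets a = sets c" and ac: "absolutely_continuous c a"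
begin

definition F where "F x = enn2real (RN_deriv c a x)"

lemma dens: "density c (RN_deriv c a) = a"
proof -
  interpret c: finite_measure c by (rule fc)
  show ?thesis using ac sets_eq by (intro c.density_RN_deriv) auto
qed

lemma RN_fin: "AE x in c. RN_deriv c a x \<noteq> \<infinity>"
proof -
  interpret c: finite_measure c by (rule fc)
  interpret a: finite_measure a by (rule fa)
  show ?thesis using ac sets_eq by (intro c.RN_deriv_finite a.sigma_finite_measure_axioms) auto
qed

lemma F_meas[measurable]: "F \<in> borel_measurable c"
  unfolding F_def by measurable

lemma F_nonneg: "F x \<ge> 0" unfolding F_def by simp

lemma F_meas_a[measurable]: "F \<in> borel_measurable a"
  unfolding F_def by (subst measurable_cong_sets[OF sets_eq refl]) measurable

lemma logint_eq: "logint a c = eint a (\<lambda>x. ereal (ln (F x)))"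
  using sets_eq ac by (simp add: logint_def F_def)

lemma logint_density: "logint a c = eint c (\<lambda>x. ereal (F x * ln (F x)))"
proof -
  have "logint a c = eint (density c (RN_deriv c a)) (\<lambda>x. ereal (ln (F x)))"
    using logint_eq dens by simp
  also have "\<dots> = eint c (\<lambda>x. ereal (F x * ln (F x)))"
    by (subst eint_density_real) (use RN_fin in \<open>auto simp: F_def\<close>)
  finally show ?thesis .
qed

lemma negpart_c_le: "(\<integral>\<^sup>+x. ennreal (- (F x * ln (F x))) \<partial>c) \<le> emeasure c (space c)"
proof -
  have "(\<integral>\<^sup>+x. ennreal (- (F x * ln (F x))) \<partial>c) \<le> (\<integral>\<^sup>+x. 1 \<partial>c)"
    by (intro nn_integral_mono) (use neg_xlnx_le_1[OF F_nonneg] in \<open>auto intro: ennreal_leI\<close>)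
  then show ?thesis by simp
qed

lemma negpart_c_fin: "(\<integral>\<^sup>+x. ennreal (- (F x * ln (F x))) \<partial>c) \<noteq> \<infinity>"
proof -
  interpret c: finite_measure c by (rule fc)
  show ?thesis using negpart_c_le c.emeasure_finite[of "space c"] by (auto simp: top_unique)
qed

lemma negpart_a_eq: "(\<integral>\<^sup>+x. ennreal (- ln (F x)) \<partial>a) = (\<integral>\<^sup>+x. ennreal (- (F x * ln (F x))) \<partial>c)"
proof -
  have "(\<integral>\<^sup>+x. ennreal (- ln (F x)) \<partial>a) = (\<integral>\<^sup>+x. ennreal (- ln (F x)) \<partial>density c (RN_deriv c a))"
    using dens by simp
  also have "\<dots> = (\<integral>\<^sup>+x. ennreal (F x * (- ln (F x))) \<partial>c)"
    by (subst nn_density_real) (use RN_fin in \<open>auto simp: F_def\<close>)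
  finally show ?thesis by simp
qed

lemma negpart_a_fin: "(\<integral>\<^sup>+x. ennreal (- ln (F x)) \<partial>a) \<noteq> \<infinity>"
  using negpart_a_eq negpart_c_fin by simp

lemma logint_not_minf: "logint a c \<noteq> -\<infinity>"
  using negpart_c_fin unfolding logint_density eint_def by (auto simp: enn_minus_not_minf)

lemma F_pos_AE: "AE x in a. F x > 0"
proof -
  have "AE x in density c (RN_deriv c a). F x > 0"
    by (subst AE_density) (use RN_fin in \<open>auto simp: F_def elim!: eventually_mono simp: enn2real_positive_iff less_top\<close>)
  from this[unfolded dens] show ?thesis .
qed


lemma F_nn: "(\<integral>\<^sup>+ x. ennreal (F x) \<partial>c) = emeasure a (space a)"
proof -
  have "(\<integral>\<^sup>+ x. ennreal (F x) \<partial>c) = (\<integral>\<^sup>+ x. RN_deriv c a x \<partial>c)"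
    using RN_fin by (intro nn_integral_cong_AE) (auto simp: F_def ennreal_enn2real_if elim!: eventually_mono)
  also have "\<dots> = emeasure (density c (RN_deriv c a)) (space c)"
    by (simp add: emeasure_density)
  also have "\<dots> = emeasure a (space a)"
    using dens sets_eq_imp_space_eq[OF sets_eq] by simp
  finally show ?thesis .
qed

lemma F_int: "integrable c F"
proof -
  interpret a: finite_measure a by (rule fa)
  show ?thesis unfolding real_integrable_def
    using F_nn a.emeasure_finite[of "space a"] by (auto simp: ennreal_neg F_nonneg)
qed

lemma F_integral: "integral\<^sup>L c F = mass a"
  using F_nn by (simp add: integral_eq_nn_integral F_nonneg mass_def measure_def)

end


lemma ereal_mult_minus_fin:
  fixes X Y :: ereal assumes "\<bar>Y\<bar> \<noteq> \<infinity>" "r \<ge> 0"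
  shows "ereal r * X - ereal r * Y = ereal r * (X - Y)"
  using assms by (cases X; cases Y) (auto simp: algebra_simps)

lemma logint_null:
  assumes "sets a = sets c" "emeasure a (space a) = 0"
  shows "logint a c = 0"
proof -
  have "absolutely_continuous c a"
    unfolding absolutely_continuous_def
  proof
    fix A assume "A \<in> null_sets c"
    then have A: "A \<in> sets a" using assms by (auto simp: null_sets_def)
    then have "emeasure a A \<le> emeasure a (space a)" by (intro emeasure_mono) (auto dest: sets.sets_into_space)
    then show "A \<in> null_sets a" using A assms by (auto simp: null_sets_def)
  qed
  then show ?thesis using assms by (simp add: logint_def eint_null)
qed

lemma logint_not_ac:
  assumes "\<not> absolutely_continuous c a"
  shows "logint a c = \<infinity>"
  using assms by (simp add: logint_def)

lemma logint_not_minf_gen: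
  assumes "finite_measure a" "finite_measure c" "sets a = sets c"
  shows "logint a c \<noteq> -\<infinity>"
proof (cases "absolutely_continuous c a")
  case True
  interpret acpair a c by (rule acpair.intro) (use assms True in auto)
  show ?thesis by (rule logint_not_minf)
qed (simp add: logint_not_ac)

lemma fst_integral:
  assumes "finite_measure b" and h[measurable]: "h \<in> borel_measurable a"
  shows "(\<integral>\<^sup>+z. h (fst z) \<partial>(a \<Otimes>\<^sub>M b)) = emeasure b (space b) * (\<integral>\<^sup>+x. h x \<partial>a)"
proof -
  interpret b: finite_measure b by fact
  have "(\<integral>\<^sup>+z. h (fst z) \<partial>(a \<Otimes>\<^sub>M b)) = (\<integral>\<^sup>+x. \<integral>\<^sup>+y. h x \<partial>b \<partial>a)"
    by (subst b.nn_integral_fst[symmetric]) auto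
  also have "\<dots> = (\<integral>\<^sup>+x. h x * emeasure b (space b) \<partial>a)" by simp
  also have "\<dots> = emeasure b (space b) * (\<integral>\<^sup>+x. h x \<partial>a)"
    by (simp add: nn_integral_multc mult.commute)
  finally show ?thesis .
qed

lemma snd_integral:
  assumes "finite_measure b" and h[measurable]: "h \<in> borel_measurable b"
  shows "(\<integral>\<^sup>+z. h (snd z) \<partial>(a \<Otimes>\<^sub>M b)) = emeasure a (space a) * (\<integral>\<^sup>+x. h x \<partial>b)"
proof -
  interpret b: finite_measure b by fact
  have "(\<integral>\<^sup>+z. h (snd z) \<partial>(a \<Otimes>\<^sub>M b)) = (\<integral>\<^sup>+x. \<integral>\<^sup>+y. h y \<partial>b \<partial>a)"
    by (subst b.nn_integral_fst[symmetric]) auto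
  also have "\<dots> = emeasure a (space a) * (\<integral>\<^sup>+x. h x \<partial>b)"
    by (simp add: mult.commute)
  finally show ?thesis .
qed

lemma eint_fst:
  assumes fb: "finite_measure b" and u[measurable]: "u \<in> borel_measurable a"
    and negfin: "(\<integral>\<^sup>+x. ennreal (- u x) \<partial>a) \<noteq> \<infinity>"
  shows "eint (a \<Otimes>\<^sub>M b) (\<lambda>z. ereal (u (fst z))) = ereal (mass b) * eint a (\<lambda>x. ereal (u x))"
    and "(\<integral>\<^sup>+z. ennreal (- u (fst z)) \<partial>(a \<Otimes>\<^sub>M b)) = emeasure b (space b) * (\<integral>\<^sup>+x. ennreal (- u x) \<partial>a)"
proof -
  interpret b: finite_measure b by fact
  have e: "emeasure b (space b) = ennreal (mass b)" by (simp add: mass_def b.emeasure_eq_measure)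
  show "(\<integral>\<^sup>+z. ennreal (- u (fst z)) \<partial>(a \<Otimes>\<^sub>M b)) = emeasure b (space b) * (\<integral>\<^sup>+x. ennreal (- u x) \<partial>a)"
    by (rule fst_integral[OF fb]) simp
  have "eint (a \<Otimes>\<^sub>M b) (\<lambda>z. ereal (u (fst z))) =
    ereal (mass b) * enn2ereal (\<integral>\<^sup>+x. ennreal (u x) \<partial>a) - ereal (mass b) * enn2ereal (\<integral>\<^sup>+x. ennreal (- u x) \<partial>a)"
    unfolding eint_real
    by (subst fst_integral[OF fb], simp, subst fst_integral[OF fb], simp)
       (simp add: e times_ennreal.rep_eq mass_def)
  also have "\<dots> = ereal (mass b) * eint a (\<lambda>x. ereal (u x))"
    unfolding eint_real using negfin
    by (intro ereal_mult_minus_fin) (auto simp: mass_def)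
  finally show "eint (a \<Otimes>\<^sub>M b) (\<lambda>z. ereal (u (fst z))) = ereal (mass b) * eint a (\<lambda>x. ereal (u x))" .
qed


lemma eint_snd:
  assumes fb: "finite_measure b" and fa: "finite_measure a" and u[measurable]: "u \<in> borel_measurable b"
    and negfin: "(\<integral>\<^sup>+x. ennreal (- u x) \<partial>b) \<noteq> \<infinity>"
  shows "eint (a \<Otimes>\<^sub>M b) (\<lambda>z. ereal (u (snd z))) = ereal (mass a) * eint b (\<lambda>x. ereal (u x))"
    and "(\<integral>\<^sup>+z. ennreal (- u (snd z)) \<partial>(a \<Otimes>\<^sub>M b)) = emeasure a (space a) * (\<integral>\<^sup>+x. ennreal (- u x) \<partial>b)"
proof -
  interpret a: finite_measure a by fact
  have e: "emeasure a (space a) = ennreal (mass a)" by (simp add: mass_def a.emeasure_eq_measure)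
  show "(\<integral>\<^sup>+z. ennreal (- u (snd z)) \<partial>(a \<Otimes>\<^sub>M b)) = emeasure a (space a) * (\<integral>\<^sup>+x. ennreal (- u x) \<partial>b)"
    by (rule snd_integral[OF fb]) simp
  have "eint (a \<Otimes>\<^sub>M b) (\<lambda>z. ereal (u (snd z))) =
    ereal (mass a) * enn2ereal (\<integral>\<^sup>+x. ennreal (u x) \<partial>b) - ereal (mass a) * enn2ereal (\<integral>\<^sup>+x. ennreal (- u x) \<partial>b)"
    unfolding eint_real
    by (subst snd_integral[OF fb], simp, subst snd_integral[OF fb], simp)
       (simp add: e times_ennreal.rep_eq mass_def)
  also have "\<dots> = ereal (mass a) * eint b (\<lambda>x. ereal (u x))"
    unfolding eint_real using negfin
    by (intro ereal_mult_minus_fin) (auto simp: mass_def)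
  finally show "eint (a \<Otimes>\<^sub>M b) (\<lambda>z. ereal (u (snd z))) = ereal (mass a) * eint b (\<lambda>x. ereal (u x))" .
qed

lemma logint_prod_ac:
  assumes fa: "finite_measure a" and fb: "finite_measure b" and fc: "finite_measure c" and fd: "finite_measure d"
    and sac: "sets a = sets c" and sbd: "sets b = sets d"
    and ac1: "absolutely_continuous c a" and ac2: "absolutely_continuous d b"
  shows "logint (a \<Otimes>\<^sub>M b) (c \<Otimes>\<^sub>M d) = ereal (mass b) * logint a c + ereal (mass a) * logint b d"
proof -
  interpret P1: acpair a c by (rule acpair.intro) fact+
  interpret P2: acpair b d by (rule acpair.intro) fact+
  interpret c: finite_measure c by fact
  interpret d: finite_measure d by fact
  interpret a: finite_measure a by fact
  interpret b: finite_measure b by fact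
  interpret cd: pair_sigma_finite c d by intro_locales
  interpret ab: pair_sigma_finite a b by intro_locales
  have sets_ab: "sets (a \<Otimes>\<^sub>M b) = sets (c \<Otimes>\<^sub>M d)" using sac sbd by (rule sets_pair_measure_cong)
  have dens: "a \<Otimes>\<^sub>M b = density (c \<Otimes>\<^sub>M d) (\<lambda>(x,y). RN_deriv c a x * RN_deriv d b y)"
  proof -
    have "a \<Otimes>\<^sub>M b = density c (RN_deriv c a) \<Otimes>\<^sub>M density d (RN_deriv d b)"
      using P1.dens P2.dens by simp
    also have "\<dots> = density (c \<Otimes>\<^sub>M d) (\<lambda>(x,y). RN_deriv c a x * RN_deriv d b y)"
      by (rule pair_measure_density) (auto simp: P2.dens intro: d.sigma_finite_measure_axioms b.sigma_finite_measure_axioms)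
    finally show ?thesis .
  qed
  have acab: "absolutely_continuous (c \<Otimes>\<^sub>M d) (a \<Otimes>\<^sub>M b)"
    unfolding dens by (rule absolutely_continuousI_density) measurable
  have "AE z in c \<Otimes>\<^sub>M d. (\<lambda>(x,y). RN_deriv c a x * RN_deriv d b y) z = RN_deriv (c \<Otimes>\<^sub>M d) (a \<Otimes>\<^sub>M b) z"
    by (rule cd.RN_deriv_unique) (auto simp: dens)
  then have ae1: "AE z in a \<Otimes>\<^sub>M b. (\<lambda>(x,y). RN_deriv c a x * RN_deriv d b y) z = RN_deriv (c \<Otimes>\<^sub>M d) (a \<Otimes>\<^sub>M b) z"
    by (rule absolutely_continuous_AE[OF sets_ab acab])
  have ae2: "AE z in a \<Otimes>\<^sub>M b. P1.F (fst z) > 0 \<and> P2.F (snd z) > 0"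
  proof (rule ab.AE_pair_measure)
    show "{x \<in> space (a \<Otimes>\<^sub>M b). 0 < P1.F (fst x) \<and> 0 < P2.F (snd x)} \<in> sets (a \<Otimes>\<^sub>M b)"
      by measurable
    show "AE x in a. AE y in b. 0 < P1.F (fst (x, y)) \<and> 0 < P2.F (snd (x, y))"
      using P1.F_pos_AE P2.F_pos_AE by (auto elim!: eventually_mono)
  qed
  have "logint (a \<Otimes>\<^sub>M b) (c \<Otimes>\<^sub>M d) = eint (a \<Otimes>\<^sub>M b) (\<lambda>z. ereal (ln (enn2real (RN_deriv (c \<Otimes>\<^sub>M d) (a \<Otimes>\<^sub>M b) z))))"
    using sets_ab acab by (simp add: logint_def)
  also have "\<dots> = eint (a \<Otimes>\<^sub>M b) (\<lambda>z. ereal (ln (P1.F (fst z)) + ln (P2.F (snd z))))"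
  proof (rule eint_cong_AE)
    show "AE z in a \<Otimes>\<^sub>M b. ereal (ln (enn2real (RN_deriv (c \<Otimes>\<^sub>M d) (a \<Otimes>\<^sub>M b) z))) = ereal (ln (P1.F (fst z)) + ln (P2.F (snd z)))"
      using ae1 ae2
    proof (eventually_elim)
      case (elim z)
      obtain x y where z: "z = (x,y)" by (cases z)
      have "enn2real (RN_deriv (c \<Otimes>\<^sub>M d) (a \<Otimes>\<^sub>M b) z) = P1.F x * P2.F y"
        using elim(1) by (simp add: z P1.F_def P2.F_def flip: enn2real_mult)
      then show ?case using elim(2) by (simp add: z ln_mult)
    qed
  qed
  also have "\<dots> = eint (a \<Otimes>\<^sub>M b) (\<lambda>z. ereal (ln (P1.F (fst z)))) + eint (a \<Otimes>\<^sub>M b) (\<lambda>z. ereal (ln (P2.F (snd z))))"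
  proof (rule eint_add_real)
    show "(\<integral>\<^sup>+z. ennreal (- ln (P1.F (fst z))) \<partial>(a \<Otimes>\<^sub>M b)) \<noteq> \<infinity>"
      using P1.negpart_a_fin by (subst eint_fst(2)[OF fb _ P1.negpart_a_fin]) (auto simp: b.emeasure_finite ennreal_mult_eq_top_iff)
    show "(\<integral>\<^sup>+z. ennreal (- ln (P2.F (snd z))) \<partial>(a \<Otimes>\<^sub>M b)) \<noteq> \<infinity>"
      using P2.negpart_a_fin by (subst eint_snd(2)[OF fb fa _ P2.negpart_a_fin]) (auto simp: a.emeasure_finite ennreal_mult_eq_top_iff)
  qed measurable
  also have "\<dots> = ereal (mass b) * logint a c + ereal (mass a) * logint b d"
    by (simp add: eint_fst(1)[OF fb _ P1.negpart_a_fin] eint_snd(1)[OF fb fa _ P2.negpart_a_fin] P1.logint_eq P2.logint_eq)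
  finally show ?thesis .
qed

lemma emeasure_prod_space:
  assumes "finite_measure a" "finite_measure b"
  shows "emeasure (a \<Otimes>\<^sub>M b) (space (a \<Otimes>\<^sub>M b)) = emeasure a (space a) * emeasure b (space b)"
proof -
  interpret b: finite_measure b by fact
  show ?thesis by (simp add: space_pair_measure b.emeasure_pair_measure_Times)
qed

lemma finite_measure_prod:
  assumes "finite_measure a" "finite_measure b"
  shows "finite_measure (a \<Otimes>\<^sub>M b)"
  using finite_measure_pair_measure[OF assms(2,1)] .

lemma mass_prod:
  assumes "finite_measure a" "finite_measure b"
  shows "mass (a \<Otimes>\<^sub>M b) = mass a * mass b"
proof -
  interpret a: finite_measure a by fact
  interpret b: finite_measure b by fact
  interpret ab: finite_measure "a \<Otimes>\<^sub>M b" by (rule finite_measure_prod) fact+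
  have "ennreal (mass (a \<Otimes>\<^sub>M b)) = ennreal (mass a * mass b)"
    using emeasure_prod_space[OF assms]
    by (simp add: mass_def ab.emeasure_eq_measure a.emeasure_eq_measure b.emeasure_eq_measure ennreal_mult)
  then show ?thesis by (simp add: mass_def)
qed

lemma not_ac_prod1:
  assumes fa: "finite_measure a" "finite_measure b" "finite_measure c" "finite_measure d"
    and sac: "sets a = sets c" and sbd: "sets b = sets d"
    and nac: "\<not> absolutely_continuous c a" and bpos: "emeasure b (space b) \<noteq> 0"
  shows "\<not> absolutely_continuous (c \<Otimes>\<^sub>M d) (a \<Otimes>\<^sub>M b)"
proof
  interpret a: finite_measure a by fact
  interpret b: finite_measure b by fact
  interpret c: finite_measure c by fact
  interpret d: finite_measure d by fact
  assume ac: "absolutely_continuous (c \<Otimes>\<^sub>M d) (a \<Otimes>\<^sub>M b)"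
  from nac obtain A where A: "A \<in> null_sets c" "A \<notin> null_sets a"
    unfolding absolutely_continuous_def by auto
  have Ac: "A \<in> sets c" and Ac0: "emeasure c A = 0" using A by auto
  have Aa: "A \<in> sets a" using Ac sac by simp
  have sd: "space d = space b" using sbd by (metis sets_eq_imp_space_eq)
  have "A \<times> space d \<in> sets (c \<Otimes>\<^sub>M d)" using Ac by auto
  then have "A \<times> space d \<in> null_sets (c \<Otimes>\<^sub>M d)"
    using Ac Ac0 by (simp add: d.emeasure_pair_measure_Times null_sets_def)
  then have "A \<times> space b \<in> null_sets (a \<Otimes>\<^sub>M b)" using ac sd unfolding absolutely_continuous_def by auto
  then have "emeasure (a \<Otimes>\<^sub>M b) (A \<times> space b) = 0" by auto
  then have "emeasure a A * emeasure b (space b) = 0" using Aa by (simp add: b.emeasure_pair_measure_Times)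
  then show False using A Aa bpos by auto
qed

lemma not_ac_prod2:
  assumes fa: "finite_measure a" "finite_measure b" "finite_measure c" "finite_measure d"
    and sac: "sets a = sets c" and sbd: "sets b = sets d"
    and nac: "\<not> absolutely_continuous d b" and apos: "emeasure a (space a) \<noteq> 0"
  shows "\<not> absolutely_continuous (c \<Otimes>\<^sub>M d) (a \<Otimes>\<^sub>M b)"
proof
  interpret a: finite_measure a by fact
  interpret b: finite_measure b by fact
  interpret c: finite_measure c by fact
  interpret d: finite_measure d by fact
  assume ac: "absolutely_continuous (c \<Otimes>\<^sub>M d) (a \<Otimes>\<^sub>M b)"
  from nac obtain B where B: "B \<in> null_sets d" "B \<notin> null_sets b"
    unfolding absolutely_continuous_def by auto
  have Bd: "B \<in> sets d" and Bd0: "emeasure d B = 0" using B by auto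
  have Bb: "B \<in> sets b" using Bd sbd by simp
  have sc: "space c = space a" using sac by (metis sets_eq_imp_space_eq)
  have "space c \<times> B \<in> sets (c \<Otimes>\<^sub>M d)" using Bd by auto
  then have "space c \<times> B \<in> null_sets (c \<Otimes>\<^sub>M d)"
    using Bd Bd0 by (simp add: d.emeasure_pair_measure_Times null_sets_def)
  then have "space a \<times> B \<in> null_sets (a \<Otimes>\<^sub>M b)" using ac sc unfolding absolutely_continuous_def by auto
  then have "emeasure (a \<Otimes>\<^sub>M b) (space a \<times> B) = 0" by auto
  then have "emeasure a (space a) * emeasure b B = 0" using Bb by (simp add: b.emeasure_pair_measure_Times)
  then show False using B Bb apos by auto
qed

lemma mass_zero_iff:
  assumes "finite_measure a"
  shows "mass a = 0 \<longleftrightarrow> emeasure a (space a) = 0"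
proof -
  interpret a: finite_measure a by fact
  show ?thesis by (simp add: mass_def a.emeasure_eq_measure)
qed

lemma logint_prod:
  assumes fa: "finite_measure a" and fb: "finite_measure b" and fc: "finite_measure c" and fd: "finite_measure d"
    and sac: "sets a = sets c" and sbd: "sets b = sets d"
  shows "logint (a \<Otimes>\<^sub>M b) (c \<Otimes>\<^sub>M d) = ereal (mass b) * logint a c + ereal (mass a) * logint b d"
proof -
  have sets_ab: "sets (a \<Otimes>\<^sub>M b) = sets (c \<Otimes>\<^sub>M d)" using sac sbd by (rule sets_pair_measure_cong)
  have mb: "mass b \<ge> 0" "mass a \<ge> 0" by (auto simp: mass_def)
  show ?thesis
  proof (cases "emeasure a (space a) = 0 \<or> emeasure b (space b) = 0")
    case True
    then have "emeasure (a \<Otimes>\<^sub>M b) (space (a \<Otimes>\<^sub>M b)) = 0"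
      using emeasure_prod_space[OF fa fb] by auto
    then have "logint (a \<Otimes>\<^sub>M b) (c \<Otimes>\<^sub>M d) = 0" using sets_ab by (intro logint_null)
    moreover have "ereal (mass b) * logint a c + ereal (mass a) * logint b d = 0"
      using True logint_null[OF sac] logint_null[OF sbd] mass_zero_iff[OF fa] mass_zero_iff[OF fb] by auto
    ultimately show ?thesis by simp
  next
    case False
    then have pos: "mass a > 0" "mass b > 0" using mass_zero_iff[OF fa] mass_zero_iff[OF fb] mb by auto
    show ?thesis
    proof (cases "absolutely_continuous c a")
      case ac1: True
      show ?thesis
      proof (cases "absolutely_continuous d b")
        case True
        show ?thesis by (rule logint_prod_ac) fact+
      next
        case nac: False
        have "\<not> absolutely_continuous (c \<Otimes>\<^sub>M d) (a \<Otimes>\<^sub>M b)"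
          by (rule not_ac_prod2[OF fa fb fc fd sac sbd nac]) (use False in auto)
        then show ?thesis using nac pos by (simp add: logint_not_ac)
      qed
    next
      case nac: False
      have "\<not> absolutely_continuous (c \<Otimes>\<^sub>M d) (a \<Otimes>\<^sub>M b)"
        by (rule not_ac_prod1[OF fa fb fc fd sac sbd nac]) (use False in auto)
      then show ?thesis using nac pos by (simp add: logint_not_ac)
    qed
  qed
qed


lemma eint_integrable:
  assumes "integrable M u"
  shows "eint M (\<lambda>x. ereal (u x)) = ereal (integral\<^sup>L M u)"
proof -
  from integrableE[OF assms] obtain r q where "0 \<le> r" "0 \<le> q"
    "(\<integral>\<^sup>+x. ennreal (u x)\<partial>M) = ennreal r"
    "(\<integral>\<^sup>+x. ennreal (-u x)\<partial>M) = ennreal q" "integral\<^sup>L M u = r - q" by metis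
  then show ?thesis by (simp add: eint_real)
qed

lemma xlnx_super:
  fixes x y :: real assumes "x \<ge> 0" "y \<ge> 0"
  shows "x * ln x + y * ln y \<le> (x + y) * ln (x + y)"
proof (cases "x = 0 \<or> y = 0")
  case True then show ?thesis by auto
next
  case False
  then have p: "x > 0" "y > 0" using assms by auto
  have "x * ln x \<le> x * ln (x + y)" using p by (intro mult_left_mono) auto
  moreover have "y * ln y \<le> y * ln (x + y)" using p by (intro mult_left_mono) auto
  ultimately show ?thesis by (simp add: distrib_right)
qed

lemma xlnx_lower:
  fixes y k :: real assumes "y \<ge> 0" "k > 0"
  shows "y * ln k + y - k \<le> y * ln y"
proof (cases "y = 0")
  case True then show ?thesis using assms by simp
next
  case False
  then have p: "y > 0" using assms by auto
  have "ln (k / y) \<le> k / y - 1" using p assms by (intro ln_le_minus_one) simp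
  then have "y * ln (k / y) \<le> y * (k / y - 1)" using p by (intro mult_left_mono) auto
  moreover have "y * (k / y - 1) = k - y" using p by (simp add: field_simps)
  moreover have "y * ln (k / y) = y * ln k - y * ln y" using p assms by (simp add: ln_div algebra_simps)
  ultimately show ?thesis by simp
qed

lemma ac_sub:
  assumes "absolutely_continuous m a" "sets b = sets m" "sets a = sets m"
    and le: "\<And>A. A \<in> sets m \<Longrightarrow> emeasure b A \<le> emeasure a A"
  shows "absolutely_continuous m b"
  unfolding absolutely_continuous_def
proof
  fix A assume A: "A \<in> null_sets m"
  then have "A \<in> null_sets a" using assms(1) unfolding absolutely_continuous_def by auto
  then show "A \<in> null_sets b" using le[of A] A assms(2,3) by (auto simp: null_sets_def)
qed

lemma logint_sub:
  assumes fa: "finite_measure a" and fb: "finite_measure b" and fr: "finite_measure r" and fm: "finite_measure m"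
    and sa: "sets a = sets m" and sb: "sets b = sets m" and sr: "sets r = sets m"
    and add: "\<And>A. A \<in> sets m \<Longrightarrow> emeasure a A = emeasure b A + emeasure r A"
  shows "logint b m \<le> logint a m - ereal (mass r * ln (mass r / mass m))"
proof (cases "absolutely_continuous m a")
  case False
  then show ?thesis by (simp add: logint_not_ac)
next
  case aca: True
  interpret m: finite_measure m by fact
  interpret r: finite_measure r by fact
  have acb: "absolutely_continuous m b"
    by (rule ac_sub[OF aca sb sa]) (simp add: add)
  have acr: "absolutely_continuous m r"
    by (rule ac_sub[OF aca sr sa]) (simp add: add)
  show ?thesis
  proof (cases "mass r = 0")
    case True
    then have r0: "emeasure r (space r) = 0" using mass_zero_iff[OF fr] by simp
    have "a = b"
    proof (rule measure_eqI)
      show "sets a = sets b" using sa sb by simp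
      fix A assume "A \<in> sets a"
      then have A: "A \<in> sets m" "A \<in> sets r" using sa sr by auto
      have "emeasure r A \<le> emeasure r (space r)" using A by (intro emeasure_mono) (auto dest: sets.sets_into_space)
      then have "emeasure r A = 0" using r0 by simp
      then show "emeasure a A = emeasure b A" using add[OF A(1)] by simp
    qed
    then show ?thesis using True by simp
  next
    case False
    then have Hpos: "mass r > 0" by (simp add: mass_def less_le)
    have Mpos: "mass m > 0"
    proof (rule ccontr)
      assume "\<not> mass m > 0"
      then have "emeasure m (space m) = 0" using mass_zero_iff[OF fm] by (simp add: mass_def less_le)
      then have "space m \<in> null_sets m" by auto
      then have "space m \<in> null_sets r" using acr unfolding absolutely_continuous_def by auto
      then have "emeasure r (space r) = 0" using sets_eq_imp_space_eq[OF sr] by auto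
      then show False using Hpos mass_zero_iff[OF fr] by simp
    qed
    interpret Pa: acpair a m by (rule acpair.intro) (use assms aca in auto)
    interpret Pb: acpair b m by (rule acpair.intro) (use assms acb in auto)
    interpret Pr: acpair r m by (rule acpair.intro) (use assms acr in auto)
    define k where "k = mass r / mass m"
    have kpos: "k > 0" using Hpos Mpos by (simp add: k_def)
    have dsum: "density m (\<lambda>x. RN_deriv m b x + RN_deriv m r x) = a"
    proof (rule measure_eqI)
      show "sets (density m (\<lambda>x. RN_deriv m b x + RN_deriv m r x)) = sets a" using sa by simp
      fix A assume "A \<in> sets (density m (\<lambda>x. RN_deriv m b x + RN_deriv m r x))"
      then have A: "A \<in> sets m" by simp
      have "emeasure (density m (\<lambda>x. RN_deriv m b x + RN_deriv m r x)) A
          = (\<integral>\<^sup>+x. RN_deriv m b x * indicator A x + RN_deriv m r x * indicator A x \<partial>m)"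
        using A by (simp add: emeasure_density distrib_right)
      also have "\<dots> = emeasure (density m (RN_deriv m b)) A + emeasure (density m (RN_deriv m r)) A"
        using A by (simp add: emeasure_density nn_integral_add)
      also have "\<dots> = emeasure a A" using Pb.dens Pr.dens add[OF A] by simp
      finally show "emeasure (density m (\<lambda>x. RN_deriv m b x + RN_deriv m r x)) A = emeasure a A" .
    qed
    have "AE x in m. RN_deriv m b x + RN_deriv m r x = RN_deriv m a x"
      by (rule m.RN_deriv_unique[OF _ dsum]) measurable
    then have Fsum: "AE x in m. Pa.F x = Pb.F x + Pr.F x"
      using Pb.RN_fin Pr.RN_fin
      by eventually_elim (auto simp: Pa.F_def Pb.F_def Pr.F_def enn2real_plus less_top[symmetric] dest: sym)
    have "logint b m = eint m (\<lambda>x. ereal (Pb.F x * ln (Pb.F x)))" by (rule Pb.logint_density)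
    also have "\<dots> \<le> eint m (\<lambda>x. ereal (Pa.F x * ln (Pa.F x) + ((- ln k - 1) * Pr.F x + k)))"
    proof (rule eint_mono_AE)
      show "AE x in m. ereal (Pb.F x * ln (Pb.F x)) \<le> ereal (Pa.F x * ln (Pa.F x) + ((- ln k - 1) * Pr.F x + k))"
        using Fsum
      proof eventually_elim
        case (elim x)
        have "Pb.F x * ln (Pb.F x) + Pr.F x * ln (Pr.F x) \<le> Pa.F x * ln (Pa.F x)"
          using xlnx_super[OF Pb.F_nonneg Pr.F_nonneg, of x x] elim by simp
        moreover have "Pr.F x * ln k + Pr.F x - k \<le> Pr.F x * ln (Pr.F x)"
          by (rule xlnx_lower[OF Pr.F_nonneg kpos])
        ultimately show ?case by (simp add: algebra_simps)
      qed
    qed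
    also have "\<dots> = eint m (\<lambda>x. ereal (Pa.F x * ln (Pa.F x))) + eint m (\<lambda>x. ereal ((- ln k - 1) * Pr.F x + k))"
    proof (rule eint_add_real)
      show "(\<integral>\<^sup>+x. ennreal (- (Pa.F x * ln (Pa.F x))) \<partial>m) \<noteq> \<infinity>" by (rule Pa.negpart_c_fin)
      have "integrable m (\<lambda>x. (- ln k - 1) * Pr.F x + k)"
        using Pr.F_int by auto
      then show "(\<integral>\<^sup>+x. ennreal (- ((- ln k - 1) * Pr.F x + k)) \<partial>m) \<noteq> \<infinity>"
        by (auto dest: integrableD)
    qed measurable
    also have "eint m (\<lambda>x. ereal ((- ln k - 1) * Pr.F x + k)) = ereal ((- ln k - 1) * mass r + k * mass m)"
    proof -
      have "integrable m (\<lambda>x. (- ln k - 1) * Pr.F x + k)"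
        using Pr.F_int by auto
      then show ?thesis
        using Pr.F_int Pr.F_integral by (simp add: eint_integrable mass_def)
    qed
    also have "(- ln k - 1) * mass r + k * mass m = - (mass r * ln (mass r / mass m))"
      using Mpos by (simp add: k_def algebra_simps)
    also have "eint m (\<lambda>x. ereal (Pa.F x * ln (Pa.F x))) = logint a m" by (rule Pa.logint_density[symmetric])
    finally show ?thesis by (cases "logint a m") auto
  qed
qed


lemma Mplus_D:
  assumes "\<sigma> \<in> Mplus" shows "finite_measure \<sigma>" "sets \<sigma> = sets borel"
  using assms by (auto simp: Mplus_def)

locale gw =
  fixes \<mu> :: "'a::polish_space measure" and \<nu> :: "'b::polish_space measure"
    and lam :: "real \<Rightarrow> real" and \<rho> \<epsilon> :: real
    and \<gamma> :: "('a \<times> 'b) measure"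
  assumes mu: "sets \<mu> = sets borel" "finite_measure \<mu>"
    and nu: "sets \<nu> = sets borel" "finite_measure \<nu>"
    and lam_meas: "lam \<in> borel_measurable borel"
    and rho: "\<rho> > 0" and eps: "\<epsilon> \<ge> 0"
    and gamma: "\<gamma> \<in> Mplus"
begin

lemma sets_borel_pair: "sets (borel :: ('a \<times> 'b) measure) = sets (borel \<Otimes>\<^sub>M borel)"
  by (metis borel_prod)

lemma sets_MN: "sets (\<mu> \<Otimes>\<^sub>M \<nu>) = sets (borel :: ('a \<times> 'b) measure)"
  using sets_pair_measure_cong[OF mu(1) nu(1)] sets_borel_pair by simp

lemma fin_MN: "finite_measure (\<mu> \<Otimes>\<^sub>M \<nu>)"
  by (rule finite_measure_prod) (use mu nu in auto)

lemma fst_meas: "sets \<sigma> = sets (borel :: ('a \<times> 'b) measure) \<Longrightarrow> fst \<in> measurable \<sigma> (borel :: 'a measure)"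
proof -
  assume "sets \<sigma> = sets (borel :: ('a \<times> 'b) measure)"
  then have e: "sets \<sigma> = sets (borel \<Otimes>\<^sub>M borel :: ('a \<times> 'b) measure)" using sets_borel_pair by simp
  show ?thesis by (subst measurable_cong_sets[OF e refl]) (rule measurable_fst)
qed

lemma snd_meas: "sets \<sigma> = sets (borel :: ('a \<times> 'b) measure) \<Longrightarrow> snd \<in> measurable \<sigma> (borel :: 'b measure)"
proof -
  assume "sets \<sigma> = sets (borel :: ('a \<times> 'b) measure)"
  then have e: "sets \<sigma> = sets (borel \<Otimes>\<^sub>M borel :: ('a \<times> 'b) measure)" using sets_borel_pair by simp
  show ?thesis by (subst measurable_cong_sets[OF e refl]) (rule measurable_snd)
qed

lemma marg1_facts:
  fixes \<sigma> :: "('a \<times> 'b) measure"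
  assumes "\<sigma> \<in> Mplus"
  shows "finite_measure (marg1 \<sigma>)" "sets (marg1 \<sigma>) = sets \<mu>" "mass (marg1 \<sigma>) = mass \<sigma>"
    "\<And>B. B \<in> sets \<mu> \<Longrightarrow> emeasure (marg1 \<sigma>) B = emeasure \<sigma> (fst -` B \<inter> space \<sigma>)"
proof -
  interpret s: finite_measure \<sigma> using Mplus_D[OF assms] by simp
  have m: "fst \<in> measurable \<sigma> borel" by (rule fst_meas[OF Mplus_D(2)[OF assms]])
  show "finite_measure (marg1 \<sigma>)" unfolding marg1_def by (rule s.finite_measure_distr[OF m])
  show "sets (marg1 \<sigma>) = sets \<mu>" using mu by (simp add: marg1_def)
  show "mass (marg1 \<sigma>) = mass \<sigma>"
    using m by (simp add: marg1_def mass_def measure_distr)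
  show "\<And>B. B \<in> sets \<mu> \<Longrightarrow> emeasure (marg1 \<sigma>) B = emeasure \<sigma> (fst -` B \<inter> space \<sigma>)"
    using m mu by (simp add: marg1_def emeasure_distr)
qed

lemma marg2_facts:
  fixes \<sigma> :: "('a \<times> 'b) measure"
  assumes "\<sigma> \<in> Mplus"
  shows "finite_measure (marg2 \<sigma>)" "sets (marg2 \<sigma>) = sets \<nu>" "mass (marg2 \<sigma>) = mass \<sigma>"
    "\<And>B. B \<in> sets \<nu> \<Longrightarrow> emeasure (marg2 \<sigma>) B = emeasure \<sigma> (snd -` B \<inter> space \<sigma>)"
proof -
  interpret s: finite_measure \<sigma> using Mplus_D[OF assms] by simp
  have m: "snd \<in> measurable \<sigma> borel" by (rule snd_meas[OF Mplus_D(2)[OF assms]])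
  show "finite_measure (marg2 \<sigma>)" unfolding marg2_def by (rule s.finite_measure_distr[OF m])
  show "sets (marg2 \<sigma>) = sets \<nu>" using nu by (simp add: marg2_def)
  show "mass (marg2 \<sigma>) = mass \<sigma>"
    using m by (simp add: marg2_def mass_def measure_distr)
  show "\<And>B. B \<in> sets \<nu> \<Longrightarrow> emeasure (marg2 \<sigma>) B = emeasure \<sigma> (snd -` B \<inter> space \<sigma>)"
    using m nu by (simp add: marg2_def emeasure_distr)
qed

lemma KL_alt: "sets a = sets b \<Longrightarrow> KL a b = logint a b - ereal (mass a) + ereal (mass b)"
  by (simp add: KL_def logint_def)

definition lamf :: "('a \<times> 'b) \<Rightarrow> ('a \<times> 'b) \<Rightarrow> real" where
  "lamf z w = lam \<bar>dist (fst z) (fst w) - dist (snd z) (snd w)\<bar>"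

lemma lamf_meas_pair:
  "(\<lambda>p. lamf (fst p) (snd p)) \<in> borel_measurable ((borel \<Otimes>\<^sub>M borel) \<Otimes>\<^sub>M (borel \<Otimes>\<^sub>M borel) :: (('a \<times> 'b) \<times> ('a \<times> 'b)) measure)"
  unfolding lamf_def by (rule measurable_compose[OF _ lam_meas]) measurable

lemma lamf_meas:
  assumes "sets \<sigma> = sets (borel :: ('a \<times> 'b) measure)" "sets \<tau> = sets (borel :: ('a \<times> 'b) measure)"
  shows "(\<lambda>p. lamf (fst p) (snd p)) \<in> borel_measurable (\<sigma> \<Otimes>\<^sub>M \<tau>)"
proof -
  have "sets (\<sigma> \<Otimes>\<^sub>M \<tau>) = sets ((borel \<Otimes>\<^sub>M borel) \<Otimes>\<^sub>M (borel \<Otimes>\<^sub>M borel) :: (('a \<times> 'b) \<times> ('a \<times> 'b)) measure)"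
    using assms sets_borel_pair by (intro sets_pair_measure_cong) auto
  then show ?thesis using lamf_meas_pair by (simp cong: measurable_cong_sets)
qed

end

lemma enn2ereal_fin: "(x::ennreal) \<noteq> \<infinity> \<Longrightarrow> enn2ereal x = ereal (enn2real x)"
  by (cases x rule: ennreal_cases) auto

lemma enn_int:
  assumes f[measurable]: "f \<in> borel_measurable M" and fin: "(\<integral>\<^sup>+x. f x \<partial>M) \<noteq> \<infinity>"
  shows "integrable M (\<lambda>x. enn2real (f x))" "integral\<^sup>L M (\<lambda>x. enn2real (f x)) = enn2real (\<integral>\<^sup>+x. f x \<partial>M)"
proof -
  have ae: "AE x in M. f x \<noteq> \<infinity>" by (rule nn_integral_noteq_infinite[OF f fin])
  have eq: "(\<integral>\<^sup>+x. ennreal (enn2real (f x)) \<partial>M) = (\<integral>\<^sup>+x. f x \<partial>M)"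
    using ae by (intro nn_integral_cong_AE) (auto elim!: eventually_mono simp: ennreal_enn2real_if)
  show "integrable M (\<lambda>x. enn2real (f x))"
    unfolding real_integrable_def using eq fin by (simp add: ennreal_neg)
  show "integral\<^sup>L M (\<lambda>x. enn2real (f x)) = enn2real (\<integral>\<^sup>+x. f x \<partial>M)"
    using eq by (simp add: integral_eq_nn_integral)
qed

lemma eint_shift:
  fixes P N :: "'a \<Rightarrow> ennreal"
  assumes fs: "finite_measure \<sigma>" and [measurable]: "P \<in> borel_measurable \<sigma>" "N \<in> borel_measurable \<sigma>"
    and Pfin: "(\<integral>\<^sup>+z. P z \<partial>\<sigma>) \<noteq> \<infinity>"
  shows "eint \<sigma> (\<lambda>z. (enn2ereal (P z) - enn2ereal (N z)) + ereal k)
     = (enn2ereal (\<integral>\<^sup>+z. P z \<partial>\<sigma>) - enn2ereal (\<integral>\<^sup>+z. N z \<partial>\<sigma>)) + ereal (k * mass \<sigma>)"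
proof -
  interpret s: finite_measure \<sigma> by fact
  have fink: "ennreal \<bar>k\<bar> * emeasure \<sigma> (space \<sigma>) \<noteq> \<infinity>"
    using s.emeasure_finite[of "space \<sigma>"] by (simp add: ennreal_mult_eq_top_iff)
  have aeP: "AE z in \<sigma>. P z \<noteq> \<infinity>" by (rule nn_integral_noteq_infinite) (use Pfin in auto)
  show ?thesis
  proof (cases "(\<integral>\<^sup>+z. N z \<partial>\<sigma>) = \<infinity>")
    case Ninf: True
    let ?c = "\<lambda>z. (enn2ereal (P z) - enn2ereal (N z)) + ereal k"
    have pos: "(\<integral>\<^sup>+z. e2ennreal (?c z) \<partial>\<sigma>) \<le> (\<integral>\<^sup>+z. P z + ennreal \<bar>k\<bar> \<partial>\<sigma>)"
    proof (rule nn_integral_mono_AE)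
      show "AE z in \<sigma>. e2ennreal (?c z) \<le> P z + ennreal \<bar>k\<bar>" using aeP
      proof eventually_elim
        case (elim z)
        then obtain p where p: "P z = ennreal p" "p \<ge> 0" by (cases "P z" rule: ennreal_cases) auto
        have "?c z \<le> ereal (p + \<bar>k\<bar>)"
          using p by (cases "N z" rule: ennreal_cases) auto
        then have "e2ennreal (?c z) \<le> e2ennreal (ereal (p + \<bar>k\<bar>))" by (rule e2ennreal_mono)
        then show ?case using p by (simp add: ennreal_plus)
      qed
    qed
    also have "\<dots> = (\<integral>\<^sup>+z. P z \<partial>\<sigma>) + ennreal \<bar>k\<bar> * emeasure \<sigma> (space \<sigma>)"
      by (simp add: nn_integral_add)
    also have "\<dots> < \<infinity>" using Pfin fink
      by (simp add: less_top[symmetric])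
    finally have posfin: "(\<integral>\<^sup>+z. e2ennreal (?c z) \<partial>\<sigma>) \<noteq> \<infinity>" by simp
    have "(\<integral>\<^sup>+z. N z \<partial>\<sigma>) \<le> (\<integral>\<^sup>+z. e2ennreal (- ?c z) + (P z + ennreal \<bar>k\<bar>) \<partial>\<sigma>)"
    proof (rule nn_integral_mono_AE)
      show "AE z in \<sigma>. N z \<le> e2ennreal (- ?c z) + (P z + ennreal \<bar>k\<bar>)" using aeP
      proof eventually_elim
        case (elim z)
        then obtain p where p: "P z = ennreal p" "p \<ge> 0" by (cases "P z" rule: ennreal_cases) auto
        show ?case
        proof (cases "N z" rule: ennreal_cases)
          case (real n)
          have "ennreal n \<le> ennreal (n - p - k + (p + \<bar>k\<bar>))" by (intro ennreal_leI) auto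
          also have "\<dots> \<le> ennreal (n - p - k) + ennreal (p + \<bar>k\<bar>)"
          proof (cases "n - p - k \<ge> 0")
            case True
            then show ?thesis by (subst ennreal_plus[symmetric]) (use p in auto)
          next
            case False
            then have "ennreal (n - p - k) = 0" by (simp add: ennreal_neg)
            moreover have "ennreal (n - p - k + (p + \<bar>k\<bar>)) \<le> ennreal (p + \<bar>k\<bar>)"
              using False by (intro ennreal_leI) auto
            ultimately show ?thesis by simp
          qed
          finally show ?thesis using p real by (simp add: ennreal_plus algebra_simps)
        qed (use p in simp)
      qed
    qed
    also have "\<dots> = (\<integral>\<^sup>+z. e2ennreal (- ?c z) \<partial>\<sigma>) + ((\<integral>\<^sup>+z. P z \<partial>\<sigma>) + ennreal \<bar>k\<bar> * emeasure \<sigma> (space \<sigma>))"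
      by (simp add: nn_integral_add)
    finally have "(\<integral>\<^sup>+z. e2ennreal (- ?c z) \<partial>\<sigma>) = \<infinity>"
      using Ninf Pfin fink by (auto simp: top_unique)
    then have "eint \<sigma> ?c = -\<infinity>" using posfin unfolding eint_def
      by (cases "(\<integral>\<^sup>+z. e2ennreal (?c z) \<partial>\<sigma>)" rule: ennreal_cases) auto
    moreover have "(enn2ereal (\<integral>\<^sup>+z. P z \<partial>\<sigma>) - enn2ereal (\<integral>\<^sup>+z. N z \<partial>\<sigma>)) + ereal (k * mass \<sigma>) = -\<infinity>"
      using Ninf Pfin by (cases "(\<integral>\<^sup>+z. P z \<partial>\<sigma>)" rule: ennreal_cases) auto
    ultimately show ?thesis by simp
  next
    case Nfin: False
    have aeN: "AE z in \<sigma>. N z \<noteq> \<infinity>" by (rule nn_integral_noteq_infinite) (use Nfin in auto)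
    let ?u = "\<lambda>z. enn2real (P z) - enn2real (N z) + k"
    have "eint \<sigma> (\<lambda>z. (enn2ereal (P z) - enn2ereal (N z)) + ereal k) = eint \<sigma> (\<lambda>z. ereal (?u z))"
      by (rule eint_cong_AE) (use aeP aeN in \<open>eventually_elim, simp add: enn2ereal_fin\<close>)
    also have "\<dots> = ereal (integral\<^sup>L \<sigma> ?u)"
      using enn_int[of P] enn_int[of N] Pfin Nfin by (intro eint_integrable) auto
    also have "integral\<^sup>L \<sigma> ?u = enn2real (\<integral>\<^sup>+z. P z \<partial>\<sigma>) - enn2real (\<integral>\<^sup>+z. N z \<partial>\<sigma>) + k * mass \<sigma>"
      using enn_int[of P] enn_int[of N] Pfin Nfin by (simp add: mass_def)
    finally show ?thesis using Pfin Nfin by (simp add: enn2ereal_fin)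
  qed
qed

lemma REL:
  fixes lo s1 s2 s3 G3 :: ereal and \<rho> \<epsilon> m M mu nu w g1 g2 g3 :: real
  assumes "\<rho> > 0" "\<epsilon> \<ge> 0" "m > 0" "M \<ge> 0" "s1 \<noteq> -\<infinity>" "s2 \<noteq> -\<infinity>" "s3 \<noteq> -\<infinity>" "lo \<noteq> \<infinity>"
    and g3: "\<epsilon> = 0 \<or> G3 = ereal g3"
  shows "lo + ereal \<rho> * ((ereal m * s1 + ereal M * ereal g1) - ereal (M*m) + ereal (mu*mu))
      + ereal \<rho> * ((ereal m * s2 + ereal M * ereal g2) - ereal (M*m) + ereal (nu*nu))
      + ereal \<epsilon> * ((ereal m * s3 + ereal M * G3) - ereal (M*m) + ereal (w*w))
   = (lo + ereal ((\<rho>*g1 + \<rho>*g2 + \<epsilon>*g3)*M)) + ereal (\<rho>*m) * (s1 - ereal M + ereal mu)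
      + ereal (\<rho>*m) * (s2 - ereal M + ereal nu) + ereal (\<epsilon>*m) * (s3 - ereal M + ereal w)
      + ereal (\<rho>*(mu*mu - m*mu) + \<rho>*(nu*nu - m*nu) + \<epsilon>*(w*w - m*w))"
proof (cases "\<epsilon> = 0")
  case True
  show ?thesis using assms unfolding True
    by (cases s1; cases s2; cases lo) (simp_all add: algebra_simps zero_ereal_def[symmetric])
next
  case False
  then have e: "\<epsilon> > 0" "G3 = ereal g3" using assms by auto
  show ?thesis using assms e unfolding e(2)
    by (cases s1; cases s2; cases s3; cases lo) (simp_all add: algebra_simps)
qed

context gw
begin

definition P where "P z = (\<integral>\<^sup>+ w. ennreal (lamf z w) \<partial>\<gamma>)"
definition N where "N z = (\<integral>\<^sup>+ w. ennreal (- lamf z w) \<partial>\<gamma>)"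
definition c0 where "c0 z = enn2ereal (P z) - enn2ereal (N z)"
definition LI1 where "LI1 = logint (marg1 \<gamma>) \<mu>"
definition LI2 where "LI2 = logint (marg2 \<gamma>) \<nu>"
definition LI3 where "LI3 = logint \<gamma> (\<mu> \<Otimes>\<^sub>M \<nu>)"

definition Ofun where "Ofun \<sigma> = GWF dist dist \<mu> \<nu> lam \<rho> \<sigma> \<gamma> + ereal \<epsilon> * KL (\<sigma> \<Otimes>\<^sub>M \<gamma>) ((\<mu> \<Otimes>\<^sub>M \<nu>) \<Otimes>\<^sub>M (\<mu> \<Otimes>\<^sub>M \<nu>))"
definition Lfun where "Lfun \<sigma> = eint \<sigma> (cost dist dist \<mu> \<nu> lam \<rho> \<epsilon> \<gamma>)
         + ereal (\<rho> * mass \<gamma>) * KL (marg1 \<sigma>) \<mu>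
         + ereal (\<rho> * mass \<gamma>) * KL (marg2 \<sigma>) \<nu>
         + ereal (\<epsilon> * mass \<gamma>) * KL \<sigma> (\<mu> \<Otimes>\<^sub>M \<nu>)"

lemma gam: "finite_measure \<gamma>" "sets \<gamma> = sets borel" using Mplus_D[OF gamma] by auto

lemma PN_meas:
  fixes \<sigma> :: "('a \<times> 'b) measure"
  assumes "sets \<sigma> = sets borel"
  shows "P \<in> borel_measurable \<sigma>" "N \<in> borel_measurable \<sigma>"
proof -
  interpret g: finite_measure \<gamma> by (rule gam)
  have m[measurable]: "(\<lambda>p. lamf (fst p) (snd p)) \<in> borel_measurable (\<sigma> \<Otimes>\<^sub>M \<gamma>)"
    by (rule lamf_meas) (use assms gam in auto)
  show "P \<in> borel_measurable \<sigma>"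
    using g.borel_measurable_nn_integral_fst[of "\<lambda>p. ennreal (lamf (fst p) (snd p))" \<sigma>]
    by (simp add: P_def[abs_def])
  show "N \<in> borel_measurable \<sigma>"
    using g.borel_measurable_nn_integral_fst[of "\<lambda>p. ennreal (- lamf (fst p) (snd p))" \<sigma>]
    by (simp add: N_def[abs_def])
qed

lemma tonelli:
  fixes \<sigma> :: "('a \<times> 'b) measure"
  assumes "sets \<sigma> = sets borel"
  shows "eint (\<sigma> \<Otimes>\<^sub>M \<gamma>) (\<lambda>p. ereal (lamf (fst p) (snd p))) = enn2ereal (\<integral>\<^sup>+z. P z \<partial>\<sigma>) - enn2ereal (\<integral>\<^sup>+z. N z \<partial>\<sigma>)"
proof -
  interpret g: finite_measure \<gamma> by (rule gam)
  have m[measurable]: "(\<lambda>p. lamf (fst p) (snd p)) \<in> borel_measurable (\<sigma> \<Otimes>\<^sub>M \<gamma>)"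
    by (rule lamf_meas) (use assms gam in auto)
  have 1: "(\<integral>\<^sup>+p. ennreal (lamf (fst p) (snd p)) \<partial>(\<sigma> \<Otimes>\<^sub>M \<gamma>)) = (\<integral>\<^sup>+z. P z \<partial>\<sigma>)"
    by (subst g.nn_integral_fst[symmetric]) (auto simp: P_def[abs_def])
  have 2: "(\<integral>\<^sup>+p. ennreal (- lamf (fst p) (snd p)) \<partial>(\<sigma> \<Otimes>\<^sub>M \<gamma>)) = (\<integral>\<^sup>+z. N z \<partial>\<sigma>)"
    by (subst g.nn_integral_fst[symmetric]) (auto simp: N_def[abs_def])
  show ?thesis unfolding eint_real 1 2 ..
qed

lemma GWF_eq:
  "GWF dist dist \<mu> \<nu> lam \<rho> \<sigma> \<gamma> = eint (\<sigma> \<Otimes>\<^sub>M \<gamma>) (\<lambda>p. ereal (lamf (fst p) (snd p)))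
     + ereal \<rho> * KL (marg1 \<sigma> \<Otimes>\<^sub>M marg1 \<gamma>) (\<mu> \<Otimes>\<^sub>M \<mu>)
     + ereal \<rho> * KL (marg2 \<sigma> \<Otimes>\<^sub>M marg2 \<gamma>) (\<nu> \<Otimes>\<^sub>M \<nu>)"
proof -
  have "(\<lambda>((x,y),(x',y')). ereal (lam \<bar>dist x x' - dist y y'\<bar>)) = (\<lambda>p. ereal (lamf (fst p) (snd p)))"
    by (rule ext) (auto simp: lamf_def split: prod.splits)
  then show ?thesis by (simp add: GWF_def)
qed

lemma cost_eq:
  "cost dist dist \<mu> \<nu> lam \<rho> \<epsilon> \<gamma> z = c0 z + ereal \<rho> * LI1 + ereal \<rho> * LI2 + ereal \<epsilon> * LI3"
proof -
  obtain x y where z: "z = (x,y)" by (cases z)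
  have "(\<lambda>(x',y'). ereal (lam \<bar>dist x x' - dist y y'\<bar>)) = (\<lambda>w. ereal (lamf z w))"
    by (rule ext) (auto simp: lamf_def z split: prod.splits)
  then show ?thesis
    by (simp add: cost_def z LI1_def LI2_def LI3_def c0_def eint_real P_def N_def)
qed


lemma Ofun_expand:
  fixes \<sigma> :: "('a \<times> 'b) measure"
  assumes s: "\<sigma> \<in> Mplus"
  shows "Ofun \<sigma> = (enn2ereal (\<integral>\<^sup>+z. P z \<partial>\<sigma>) - enn2ereal (\<integral>\<^sup>+z. N z \<partial>\<sigma>))
     + ereal \<rho> * ((ereal (mass \<gamma>) * logint (marg1 \<sigma>) \<mu> + ereal (mass \<sigma>) * LI1) - ereal (mass \<sigma> * mass \<gamma>) + ereal (mass \<mu> * mass \<mu>))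
     + ereal \<rho> * ((ereal (mass \<gamma>) * logint (marg2 \<sigma>) \<nu> + ereal (mass \<sigma>) * LI2) - ereal (mass \<sigma> * mass \<gamma>) + ereal (mass \<nu> * mass \<nu>))
     + ereal \<epsilon> * ((ereal (mass \<gamma>) * logint \<sigma> (\<mu> \<Otimes>\<^sub>M \<nu>) + ereal (mass \<sigma>) * LI3) - ereal (mass \<sigma> * mass \<gamma>) + ereal (mass (\<mu> \<Otimes>\<^sub>M \<nu>) * mass (\<mu> \<Otimes>\<^sub>M \<nu>)))"
proof -
  note sM = Mplus_D[OF s]
  note m1s = marg1_facts[OF s] and m1g = marg1_facts[OF gamma]
  note m2s = marg2_facts[OF s] and m2g = marg2_facts[OF gamma]
  have k1: "KL (marg1 \<sigma> \<Otimes>\<^sub>M marg1 \<gamma>) (\<mu> \<Otimes>\<^sub>M \<mu>) = (ereal (mass \<gamma>) * logint (marg1 \<sigma>) \<mu> + ereal (mass \<sigma>) * LI1) - ereal (mass \<sigma> * mass \<gamma>) + ereal (mass \<mu> * mass \<mu>)"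
  proof -
    have se: "sets (marg1 \<sigma> \<Otimes>\<^sub>M marg1 \<gamma>) = sets (\<mu> \<Otimes>\<^sub>M \<mu>)"
      by (rule sets_pair_measure_cong) (use m1s m1g in auto)
    show ?thesis
      unfolding KL_alt[OF se] logint_prod[OF m1s(1) m1g(1) mu(2) mu(2) m1s(2) m1g(2)]
        mass_prod[OF m1s(1) m1g(1)] mass_prod[OF mu(2) mu(2)] m1s(3) m1g(3) LI1_def ..
  qed
  have k2: "KL (marg2 \<sigma> \<Otimes>\<^sub>M marg2 \<gamma>) (\<nu> \<Otimes>\<^sub>M \<nu>) = (ereal (mass \<gamma>) * logint (marg2 \<sigma>) \<nu> + ereal (mass \<sigma>) * LI2) - ereal (mass \<sigma> * mass \<gamma>) + ereal (mass \<nu> * mass \<nu>)"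
  proof -
    have se: "sets (marg2 \<sigma> \<Otimes>\<^sub>M marg2 \<gamma>) = sets (\<nu> \<Otimes>\<^sub>M \<nu>)"
      by (rule sets_pair_measure_cong) (use m2s m2g in auto)
    show ?thesis
      unfolding KL_alt[OF se] logint_prod[OF m2s(1) m2g(1) nu(2) nu(2) m2s(2) m2g(2)]
        mass_prod[OF m2s(1) m2g(1)] mass_prod[OF nu(2) nu(2)] m2s(3) m2g(3) LI2_def ..
  qed
  have sMN: "sets \<sigma> = sets (\<mu> \<Otimes>\<^sub>M \<nu>)" "sets \<gamma> = sets (\<mu> \<Otimes>\<^sub>M \<nu>)" using sM gam sets_MN by auto
  have k3: "KL (\<sigma> \<Otimes>\<^sub>M \<gamma>) ((\<mu> \<Otimes>\<^sub>M \<nu>) \<Otimes>\<^sub>M (\<mu> \<Otimes>\<^sub>M \<nu>)) = (ereal (mass \<gamma>) * logint \<sigma> (\<mu> \<Otimes>\<^sub>M \<nu>) + ereal (mass \<sigma>) * LI3) - ereal (mass \<sigma> * mass \<gamma>) + ereal (mass (\<mu> \<Otimes>\<^sub>M \<nu>) * mass (\<mu> \<Otimes>\<^sub>M \<nu>))"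
  proof -
    have se: "sets (\<sigma> \<Otimes>\<^sub>M \<gamma>) = sets ((\<mu> \<Otimes>\<^sub>M \<nu>) \<Otimes>\<^sub>M (\<mu> \<Otimes>\<^sub>M \<nu>))"
      by (rule sets_pair_measure_cong) (use sMN in auto)
    show ?thesis
      unfolding KL_alt[OF se] logint_prod[OF sM(1) gam(1) fin_MN fin_MN sMN]
        mass_prod[OF sM(1) gam(1)] mass_prod[OF fin_MN fin_MN] LI3_def ..
  qed
  show ?thesis unfolding Ofun_def GWF_eq k1 k2 k3 tonelli[OF sM(2)] ..
qed

lemma Lfun_expand:
  fixes \<sigma> :: "('a \<times> 'b) measure"
  assumes s: "\<sigma> \<in> Mplus"
  shows "Lfun \<sigma> = eint \<sigma> (cost dist dist \<mu> \<nu> lam \<rho> \<epsilon> \<gamma>)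
     + ereal (\<rho> * mass \<gamma>) * (logint (marg1 \<sigma>) \<mu> - ereal (mass \<sigma>) + ereal (mass \<mu>))
     + ereal (\<rho> * mass \<gamma>) * (logint (marg2 \<sigma>) \<nu> - ereal (mass \<sigma>) + ereal (mass \<nu>))
     + ereal (\<epsilon> * mass \<gamma>) * (logint \<sigma> (\<mu> \<Otimes>\<^sub>M \<nu>) - ereal (mass \<sigma>) + ereal (mass (\<mu> \<Otimes>\<^sub>M \<nu>)))"
proof -
  note sM = Mplus_D[OF s]
  have sMN: "sets \<sigma> = sets (\<mu> \<Otimes>\<^sub>M \<nu>)" using sM sets_MN by auto
  show ?thesis
    unfolding Lfun_def KL_alt[OF marg1_facts(2)[OF s]] KL_alt[OF marg2_facts(2)[OF s]] KL_alt[OF sMN]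
      marg1_facts(3)[OF s] marg2_facts(3)[OF s] ..
qed

lemma O_eq_L:
  fixes \<sigma> :: "('a \<times> 'b) measure"
  assumes s: "\<sigma> \<in> Mplus" and mpos: "mass \<gamma> > 0"
    and g1: "LI1 = ereal g1" and g2: "LI2 = ereal g2" and g3: "\<epsilon> = 0 \<or> LI3 = ereal g3"
    and Pfin: "(\<integral>\<^sup>+z. P z \<partial>\<sigma>) \<noteq> \<infinity>"
  shows "Ofun \<sigma> = Lfun \<sigma> + ereal (\<rho>*(mass \<mu> * mass \<mu> - mass \<gamma> * mass \<mu>) + \<rho>*(mass \<nu> * mass \<nu> - mass \<gamma> * mass \<nu>)
      + \<epsilon>*(mass (\<mu> \<Otimes>\<^sub>M \<nu>) * mass (\<mu> \<Otimes>\<^sub>M \<nu>) - mass \<gamma> * mass (\<mu> \<Otimes>\<^sub>M \<nu>)))"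
proof -
  note sM = Mplus_D[OF s]
  define k where "k = \<rho>*g1 + \<rho>*g2 + \<epsilon>*g3"
  have "\<And>z. cost dist dist \<mu> \<nu> lam \<rho> \<epsilon> \<gamma> z = c0 z + ereal k"
  proof -
    fix z
    have "ereal \<epsilon> * LI3 = ereal (\<epsilon> * g3)" using g3 by (auto simp: zero_ereal_def[symmetric])
    then show "cost dist dist \<mu> \<nu> lam \<rho> \<epsilon> \<gamma> z = c0 z + ereal k"
      by (simp add: cost_eq g1 g2 k_def add.assoc)
  qed
  then have cf: "cost dist dist \<mu> \<nu> lam \<rho> \<epsilon> \<gamma> = (\<lambda>z. c0 z + ereal k)" by (rule ext)
  then have ec: "eint \<sigma> (cost dist dist \<mu> \<nu> lam \<rho> \<epsilon> \<gamma>) = (enn2ereal (\<integral>\<^sup>+z. P z \<partial>\<sigma>) - enn2ereal (\<integral>\<^sup>+z. N z \<partial>\<sigma>)) + ereal (k * mass \<sigma>)"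
    using eint_shift[OF sM(1) PN_meas[OF sM(2)] Pfin, of k] by (simp add: c0_def[abs_def])
  have lo: "enn2ereal (\<integral>\<^sup>+z. P z \<partial>\<sigma>) - enn2ereal (\<integral>\<^sup>+z. N z \<partial>\<sigma>) \<noteq> \<infinity>"
    using Pfin by (cases "(\<integral>\<^sup>+z. P z \<partial>\<sigma>)" rule: ennreal_cases; cases "(\<integral>\<^sup>+z. N z \<partial>\<sigma>)" rule: ennreal_cases) auto
  have sMN: "sets \<sigma> = sets (\<mu> \<Otimes>\<^sub>M \<nu>)" using sM sets_MN by auto
  have nm: "logint (marg1 \<sigma>) \<mu> \<noteq> -\<infinity>" "logint (marg2 \<sigma>) \<nu> \<noteq> -\<infinity>" "logint \<sigma> (\<mu> \<Otimes>\<^sub>M \<nu>) \<noteq> -\<infinity>"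
    using logint_not_minf_gen[OF marg1_facts(1)[OF s] mu(2) marg1_facts(2)[OF s]]
      logint_not_minf_gen[OF marg2_facts(1)[OF s] nu(2) marg2_facts(2)[OF s]]
      logint_not_minf_gen[OF sM(1) fin_MN sMN] by auto
  have M0: "mass \<sigma> \<ge> 0" by (simp add: mass_def)
  have g3': "\<epsilon> = 0 \<or> LI3 = ereal g3" by fact
  show ?thesis
    unfolding Ofun_expand[OF s] Lfun_expand[OF s] ec g1 g2 k_def
    by (rule REL[OF rho eps mpos M0 nm lo g3'])
qed

end


lemma restrict_conv:
  fixes g :: "'a \<Rightarrow> ennreal" and A :: "nat \<Rightarrow> 'a set"
  assumes g[measurable]: "g \<in> borel_measurable M" and A: "\<And>n. A n \<in> sets M" "incseq A"
    and ae: "AE x in M. x \<in> (\<Union>n. A n)"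
  shows "(\<lambda>n. \<integral>\<^sup>+x. g x \<partial>density M (indicator (A n))) \<longlonglongrightarrow> (\<integral>\<^sup>+x. g x \<partial>M)"
proof -
  have eq: "\<And>n. (\<integral>\<^sup>+x. g x \<partial>density M (indicator (A n))) = (\<integral>\<^sup>+x. indicator (A n) x * g x \<partial>M)"
    using A by (simp add: nn_integral_density)
  have "(\<lambda>n. \<integral>\<^sup>+x. indicator (A n) x * g x \<partial>M) \<longlonglongrightarrow> (\<integral>\<^sup>+x. indicator (\<Union>n. A n) x * g x \<partial>M)"
  proof (rule nn_integral_LIMSEQ)
    show "incseq (\<lambda>n x. indicator (A n) x * g x)"
      using A(2) unfolding incseq_def le_fun_def
      by (auto intro!: mult_right_mono simp: indicator_def subset_eq)
    show "\<And>n. (\<lambda>x. indicator (A n) x * g x) \<in> borel_measurable M" using A by measurable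
    fix x
    show "(\<lambda>n. indicator (A n) x * g x) \<longlonglongrightarrow> indicator (\<Union>n. A n) x * g x"
    proof (cases "x \<in> (\<Union>n. A n)")
      case True
      then obtain n0 where "x \<in> A n0" by auto
      then have "\<forall>n\<ge>n0. x \<in> A n" using A(2) by (auto simp: incseq_def)
      then have "eventually (\<lambda>n. indicator (A n) x * g x = indicator (\<Union>n. A n) x * g x) sequentially"
        using True unfolding eventually_sequentially by (intro exI[of _ n0]) auto
      then show ?thesis by (rule tendsto_eventually)
    next
      case False
      then show ?thesis by (auto simp: indicator_def)
    qed
  qed
  also have "(\<integral>\<^sup>+x. indicator (\<Union>n. A n) x * g x \<partial>M) = (\<integral>\<^sup>+x. g x \<partial>M)"
    using ae by (intro nn_integral_cong_AE) (auto elim!: eventually_mono simp: indicator_def)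
  finally show ?thesis unfolding eq .
qed

lemma eint_restrict_conv:
  fixes f :: "'a \<Rightarrow> ereal" and A :: "nat \<Rightarrow> 'a set"
  assumes f[measurable]: "f \<in> borel_measurable M" and A: "\<And>n. A n \<in> sets M" "incseq A"
    and ae: "AE x in M. x \<in> (\<Union>n. A n)"
    and posfin: "(\<integral>\<^sup>+x. e2ennreal (f x) \<partial>M) \<noteq> \<infinity>"
  shows "(\<lambda>n. eint (density M (indicator (A n))) f) \<longlonglongrightarrow> eint M f"
  unfolding eint_def
proof (rule tendsto_diff_ereal_general)
  show "(\<lambda>n. enn2ereal (\<integral>\<^sup>+x. e2ennreal (f x) \<partial>density M (indicator (A n)))) \<longlonglongrightarrow> enn2ereal (\<integral>\<^sup>+x. e2ennreal (f x) \<partial>M)"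
    unfolding tendsto_enn2ereal_iff by (rule restrict_conv[OF _ A ae]) measurable
  show "(\<lambda>n. enn2ereal (\<integral>\<^sup>+x. e2ennreal (- f x) \<partial>density M (indicator (A n)))) \<longlonglongrightarrow> enn2ereal (\<integral>\<^sup>+x. e2ennreal (- f x) \<partial>M)"
    unfolding tendsto_enn2ereal_iff by (rule restrict_conv[OF _ A ae]) measurable
  show "\<not> ((enn2ereal (\<integral>\<^sup>+x. e2ennreal (f x) \<partial>M) = \<infinity> \<and> enn2ereal (\<integral>\<^sup>+x. e2ennreal (- f x) \<partial>M) = \<infinity>) \<or>
         (enn2ereal (\<integral>\<^sup>+x. e2ennreal (f x) \<partial>M) = -\<infinity> \<and> enn2ereal (\<integral>\<^sup>+x. e2ennreal (- f x) \<partial>M) = -\<infinity>))"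
  proof -
    have "enn2ereal (\<integral>\<^sup>+x. e2ennreal (f x) \<partial>M) \<noteq> \<infinity>"
      using posfin by (cases "\<integral>\<^sup>+x. e2ennreal (f x) \<partial>M" rule: ennreal_cases) auto
    moreover have "enn2ereal (\<integral>\<^sup>+x. e2ennreal (f x) \<partial>M) \<noteq> -\<infinity>"
      using enn2ereal_nonneg[of "\<integral>\<^sup>+x. e2ennreal (f x) \<partial>M"] by auto
    ultimately show ?thesis by auto
  qed
qed

lemma xlnx_bound:
  fixes h :: real assumes "0 \<le> h" "h \<le> 1"
  shows "\<bar>h * ln h\<bar> \<le> 2 * sqrt h"
proof (cases "h = 0")
  case False
  then have hp: "h > 0" using assms by auto
  have s: "sqrt h > 0" using hp by simp
  have "ln (1 / sqrt h) \<le> 1 / sqrt h - 1" using s by (intro ln_le_minus_one) simp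
  moreover have "ln (1 / sqrt h) = - ln h / 2" using hp by (simp add: ln_div ln_sqrt)
  ultimately have "- ln h \<le> 2 / sqrt h" by (simp add: field_simps)
  then have "h * (- ln h) \<le> h * (2 / sqrt h)" using hp by (intro mult_left_mono) auto
  also have "h * (2 / sqrt h) = 2 * sqrt h" using hp by (simp add: field_simps real_sqrt_mult[symmetric] del: real_sqrt_mult)
  finally have 1: "- (h * ln h) \<le> 2 * sqrt h" by simp
  have "ln h \<le> 0" using assms hp by simp
  then have "h * ln h \<le> 0" using hp by (simp add: mult_nonneg_nonpos)
  then show ?thesis using 1 by simp
qed simp

lemma xlnx_tendsto:
  fixes h :: "nat \<Rightarrow> real"
  assumes h: "h \<longlonglongrightarrow> 0" "\<And>n. h n \<ge> 0" and c: "c > 0"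
  shows "(\<lambda>n. h n * ln (h n / c)) \<longlonglongrightarrow> 0"
proof -
  have 1: "(\<lambda>n. h n * ln (h n)) \<longlonglongrightarrow> 0"
  proof (rule Lim_null_comparison)
    have "eventually (\<lambda>n. h n < 1) sequentially" using h(1) by (rule order_tendstoD) simp
    then show "eventually (\<lambda>n. norm (h n * ln (h n)) \<le> 2 * sqrt (h n)) sequentially"
      by eventually_elim (use h(2) xlnx_bound in auto)
    show "(\<lambda>n. 2 * sqrt (h n)) \<longlonglongrightarrow> 0"
      using tendsto_mult[OF tendsto_const tendsto_real_sqrt[OF h(1)], of 2] by simp
  qed
  have 2: "(\<lambda>n. h n * ln c) \<longlonglongrightarrow> 0"
    using tendsto_mult[OF h(1) tendsto_const, of "ln c"] by simp
  have "(\<lambda>n. h n * ln (h n) - h n * ln c) \<longlonglongrightarrow> 0 - 0" by (intro tendsto_diff 1 2)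
  moreover have "\<And>n. h n * ln (h n / c) = h n * ln (h n) - h n * ln c"
    using h(2) c by (case_tac "h n = 0") (auto simp: ln_div algebra_simps)
  ultimately show ?thesis by simp
qed


lemma xlnx_tendsto0:
  fixes h :: "nat \<Rightarrow> real"
  assumes h: "h \<longlonglongrightarrow> 0" "\<And>n. h n \<ge> 0" and c: "c \<ge> 0"
  shows "(\<lambda>n. h n * ln (h n / c)) \<longlonglongrightarrow> 0"
proof (cases "c = 0")
  case True then show ?thesis by simp
next
  case False then show ?thesis using xlnx_tendsto[OF h] c by simp
qed

lemma split_add:
  assumes A: "A \<in> sets M" and X: "X \<in> sets M"
  shows "emeasure M X = emeasure (density M (indicator A)) X + emeasure (density M (indicator (space M - A))) X"
proof -
  have "emeasure (density M (indicator A)) X + emeasure (density M (indicator (space M - A))) X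
      = emeasure M (A \<inter> X) + emeasure M ((space M - A) \<inter> X)"
    using A X by (simp add: emeasure_restricted)
  also have "\<dots> = emeasure M ((A \<inter> X) \<union> ((space M - A) \<inter> X))"
    using A X by (intro plus_emeasure) auto
  also have "(A \<inter> X) \<union> ((space M - A) \<inter> X) = X" using sets.sets_into_space[OF X] by auto
  finally show ?thesis by simp
qed

lemma termbound:
  fixes X :: ereal
  assumes "c \<ge> 0" "X \<le> ereal y"
  shows "ereal c * (X - ereal M + ereal u) \<le> ereal (c * (y - M + u))"
proof (cases X)
  case (real r)
  then have "r \<le> y" using assms by simp
  then show ?thesis using real assms by (simp add: mult_left_mono)
next
  case PInf then show ?thesis using assms by simp
next
  case MInf then show ?thesis using assms by (cases "c = 0") (auto simp: zero_ereal_def[symmetric])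
qed


context gw
begin

lemma cost_fin:
  assumes g1: "LI1 = ereal g1" and g2: "LI2 = ereal g2" and g3: "\<epsilon> = 0 \<or> LI3 = ereal g3"
  shows "cost dist dist \<mu> \<nu> lam \<rho> \<epsilon> \<gamma> = (\<lambda>z. c0 z + ereal (\<rho>*g1 + \<rho>*g2 + \<epsilon>*g3))"
proof (rule ext)
  fix z
  have "ereal \<epsilon> * LI3 = ereal (\<epsilon> * g3)" using g3 by (auto simp: zero_ereal_def[symmetric])
  then show "cost dist dist \<mu> \<nu> lam \<rho> \<epsilon> \<gamma> z = c0 z + ereal (\<rho>*g1 + \<rho>*g2 + \<epsilon>*g3)"
    by (simp add: cost_eq g1 g2 add.assoc)
qed

lemma approx:
  fixes \<pi>' :: "('a \<times> 'b) measure" and x :: ereal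
  assumes s: "\<pi>' \<in> Mplus" and mpos: "mass \<gamma> > 0"
    and g1: "LI1 = ereal g1" and g2: "LI2 = ereal g2" and g3: "\<epsilon> = 0 \<or> LI3 = ereal g3"
    and lt: "Lfun \<pi>' < x"
  shows "\<exists>\<sigma>\<in>Mplus. (\<integral>\<^sup>+z. P z \<partial>\<sigma>) \<noteq> \<infinity> \<and> Lfun \<sigma> < x"
proof -
  note sM = Mplus_D[OF s]
  interpret p: finite_measure \<pi>' by (rule sM(1))
  have Pm[measurable]: "P \<in> borel_measurable \<pi>'" "N \<in> borel_measurable \<pi>'" using PN_meas[OF sM(2)] by auto
  define k where "k = \<rho>*g1 + \<rho>*g2 + \<epsilon>*g3"
  have cf: "cost dist dist \<mu> \<nu> lam \<rho> \<epsilon> \<gamma> = (\<lambda>z. c0 z + ereal k)"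
    unfolding k_def by (rule cost_fin[OF g1 g2 g3])
  have cm[measurable]: "cost dist dist \<mu> \<nu> lam \<rho> \<epsilon> \<gamma> \<in> borel_measurable \<pi>'"
    unfolding cf c0_def by measurable
  define M' where "M' = mass \<pi>'"
  define E where "E = eint \<pi>' (cost dist dist \<mu> \<nu> lam \<rho> \<epsilon> \<gamma>)"
  define l1 where "l1 = logint (marg1 \<pi>') \<mu>"
  define l2 where "l2 = logint (marg2 \<pi>') \<nu>"
  define l3 where "l3 = logint \<pi>' (\<mu> \<Otimes>\<^sub>M \<nu>)"
  define m where "m = mass \<gamma>"
  have Lexp: "Lfun \<pi>' = E + ereal (\<rho> * m) * (l1 - ereal M' + ereal (mass \<mu>))
     + ereal (\<rho> * m) * (l2 - ereal M' + ereal (mass \<nu>))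
     + ereal (\<epsilon> * m) * (l3 - ereal M' + ereal (mass (\<mu> \<Otimes>\<^sub>M \<nu>)))"
    unfolding Lfun_expand[OF s] E_def l1_def l2_def l3_def M'_def m_def ..
  have Lfin: "Lfun \<pi>' \<noteq> \<infinity>" using lt by auto
  have rm: "\<rho> * m > 0" using rho mpos by (simp add: m_def)
  have sMN: "sets \<pi>' = sets (\<mu> \<Otimes>\<^sub>M \<nu>)" using sM sets_MN by auto
  have nm: "l1 \<noteq> -\<infinity>" "l2 \<noteq> -\<infinity>" "l3 \<noteq> -\<infinity>"
    unfolding l1_def l2_def l3_def
    using logint_not_minf_gen[OF marg1_facts(1)[OF s] mu(2) marg1_facts(2)[OF s]]
      logint_not_minf_gen[OF marg2_facts(1)[OF s] nu(2) marg2_facts(2)[OF s]]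
      logint_not_minf_gen[OF sM(1) fin_MN sMN] by auto
  have l1f: "l1 \<noteq> \<infinity>"
  proof
    assume "l1 = \<infinity>"
    then have "ereal (\<rho> * m) * (l1 - ereal M' + ereal (mass \<mu>)) = \<infinity>" using rho mpos by (simp add: m_def)
    then show False using Lfin unfolding Lexp by simp
  qed
  have l2f: "l2 \<noteq> \<infinity>"
  proof
    assume "l2 = \<infinity>"
    then have "ereal (\<rho> * m) * (l2 - ereal M' + ereal (mass \<nu>)) = \<infinity>" using rho mpos by (simp add: m_def)
    then show False using Lfin unfolding Lexp by simp
  qed
  have l3f: "\<epsilon> > 0 \<Longrightarrow> l3 \<noteq> \<infinity>"
  proof
    assume "\<epsilon> > 0" "l3 = \<infinity>"
    then have "ereal (\<epsilon> * m) * (l3 - ereal M' + ereal (mass (\<mu> \<Otimes>\<^sub>M \<nu>))) = \<infinity>" using mpos by (simp add: m_def)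
    then show False using Lfin unfolding Lexp by simp
  qed
  have Ef: "E \<noteq> \<infinity>"
  proof
    assume "E = \<infinity>"
    then show False using Lfin unfolding Lexp by simp
  qed
  obtain l1' where l1': "l1 = ereal l1'" using nm(1) l1f by (cases l1) auto
  obtain l2' where l2': "l2 = ereal l2'" using nm(2) l2f by (cases l2) auto
  define l3' where "l3' = (if \<epsilon> = 0 then 0 else real_of_ereal l3)"
  have l3': "\<epsilon> = 0 \<or> l3 = ereal l3'"
  proof (cases "\<epsilon> = 0")
    case False
    then have "\<epsilon> > 0" using eps by simp
    then have "l3 \<noteq> \<infinity>" by (rule l3f)
    with nm(3) show ?thesis using False by (cases l3) (auto simp: l3'_def)
  qed simp
  have posfin: "(\<integral>\<^sup>+z. e2ennreal (cost dist dist \<mu> \<nu> lam \<rho> \<epsilon> \<gamma> z) \<partial>\<pi>') \<noteq> \<infinity>"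
  proof
    assume "(\<integral>\<^sup>+z. e2ennreal (cost dist dist \<mu> \<nu> lam \<rho> \<epsilon> \<gamma> z) \<partial>\<pi>') = \<infinity>"
    then have "E = \<infinity>" unfolding E_def eint_def by simp
    then show False using Ef by simp
  qed
  have aeP: "AE z in \<pi>'. P z \<noteq> \<infinity>"
  proof -
    have "AE z in \<pi>'. e2ennreal (cost dist dist \<mu> \<nu> lam \<rho> \<epsilon> \<gamma> z) \<noteq> \<infinity>"
      by (rule nn_integral_noteq_infinite[OF _ posfin]) measurable
    then show ?thesis
      by (rule eventually_mono) (auto simp: cf c0_def)
  qed
  define A where "A n = {z \<in> space \<pi>'. P z \<le> of_nat n}" for n :: nat
  have A_sets[measurable]: "\<And>n. A n \<in> sets \<pi>'" unfolding A_def by measurable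
  have A_inc: "incseq A"
    unfolding incseq_def A_def by (auto intro: order_trans)
  have A_ae: "AE z in \<pi>'. z \<in> (\<Union>n. A n)"
    using aeP AE_space
  proof eventually_elim
    case (elim z)
    then obtain n where "P z < of_nat n" using ennreal_Ex_less_of_nat[of "P z"] by (auto simp: less_top)
    then show ?case using elim by (auto simp: A_def intro!: exI[of _ n])
  qed
  define \<sigma> where "\<sigma> n = density \<pi>' (indicator (A n))" for n
  define R where "R n = density \<pi>' (indicator (space \<pi>' - A n))" for n
  have Rsets: "\<And>n. space \<pi>' - A n \<in> sets \<pi>'" by auto
  have \<sigma>M: "\<And>n. \<sigma> n \<in> Mplus"
    unfolding Mplus_def \<sigma>_def using sM(2) p.finite_measure_restricted[OF A_sets] by auto
  have RM: "\<And>n. R n \<in> Mplus"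
    unfolding Mplus_def R_def using sM(2) p.finite_measure_restricted[OF Rsets] by auto
  have sp\<sigma>: "\<And>n. space (\<sigma> n) = space \<pi>'" "\<And>n. space (R n) = space \<pi>'" by (auto simp: \<sigma>_def R_def)
  have Pfin_n: "\<And>n. (\<integral>\<^sup>+z. P z \<partial>\<sigma> n) \<noteq> \<infinity>"
  proof -
    fix n
    have "(\<integral>\<^sup>+z. P z \<partial>\<sigma> n) = (\<integral>\<^sup>+z. indicator (A n) z * P z \<partial>\<pi>')"
      unfolding \<sigma>_def by (simp add: nn_integral_density)
    also have "\<dots> \<le> (\<integral>\<^sup>+z. of_nat n \<partial>\<pi>')"
      by (intro nn_integral_mono) (auto simp: A_def indicator_def)
    also have "\<dots> = of_nat n * emeasure \<pi>' (space \<pi>')" by simp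
    also have "\<dots> < \<infinity>"
    proof -
      have "emeasure \<pi>' (space \<pi>') \<noteq> top" using p.emeasure_finite[of "space \<pi>'"] by simp
      then have "of_nat n * emeasure \<pi>' (space \<pi>') \<noteq> top" by (simp add: ennreal_mult_eq_top_iff)
      then show ?thesis by (simp add: less_top)
    qed
    finally show "(\<integral>\<^sup>+z. P z \<partial>\<sigma> n) \<noteq> \<infinity>" by simp
  qed
  define Mn where "Mn n = measure \<pi>' (A n)" for n
  define hn where "hn n = M' - Mn n" for n
  have massM: "\<And>n. mass (\<sigma> n) = Mn n"
    unfolding \<sigma>_def mass_def Mn_def using A_sets by (simp add: measure_restricted Int_absorb2 sets.sets_into_space)
  have massR: "\<And>n. mass (R n) = hn n"
    unfolding R_def mass_def hn_def Mn_def M'_def using A_sets Rsets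
    by (simp add: measure_restricted Int_absorb2 sets.sets_into_space p.finite_measure_compl mass_def)
  have hn_nonneg: "\<And>n. hn n \<ge> 0" using massR by (metis mass_def measure_nonneg)
  have Mn_lim: "Mn \<longlonglongrightarrow> M'"
  proof -
    have "(\<lambda>n. measure \<pi>' (A n)) \<longlonglongrightarrow> measure \<pi>' (\<Union>n. A n)"
      by (rule p.finite_Lim_measure_incseq) (use A_sets A_inc in auto)
    moreover have "emeasure \<pi>' (\<Union>n. A n) = emeasure \<pi>' (space \<pi>')"
      by (rule emeasure_eq_AE) (use A_ae A_sets in \<open>auto elim!: eventually_mono\<close>)
    then have "measure \<pi>' (\<Union>n. A n) = M'" by (simp add: M'_def mass_def measure_def)
    ultimately show ?thesis by (simp add: Mn_def[abs_def])
  qed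
  have hn_lim: "hn \<longlonglongrightarrow> 0"
    using tendsto_diff[OF tendsto_const Mn_lim, of M'] by (simp add: hn_def[abs_def])
  have \<sigma>sets: "\<And>n. sets (\<sigma> n) = sets \<pi>'" "\<And>n. sets (R n) = sets \<pi>'" by (auto simp: \<sigma>_def R_def)
  have add_gen: "\<And>n X. X \<in> sets \<pi>' \<Longrightarrow> emeasure \<pi>' X = emeasure (\<sigma> n) X + emeasure (R n) X"
    unfolding \<sigma>_def R_def by (rule split_add[OF A_sets])
  have B1: "\<And>n. logint (marg1 (\<sigma> n)) \<mu> \<le> l1 - ereal (hn n * ln (hn n / mass \<mu>))"
  proof -
    fix n
    have "logint (marg1 (\<sigma> n)) \<mu> \<le> logint (marg1 \<pi>') \<mu> - ereal (mass (marg1 (R n)) * ln (mass (marg1 (R n)) / mass \<mu>))"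
    proof (rule logint_sub[OF marg1_facts(1)[OF s] marg1_facts(1)[OF \<sigma>M] marg1_facts(1)[OF RM] mu(2)
          marg1_facts(2)[OF s] marg1_facts(2)[OF \<sigma>M] marg1_facts(2)[OF RM]])
      fix B assume B: "B \<in> sets \<mu>"
      have X: "fst -` B \<inter> space \<pi>' \<in> sets \<pi>'"
        using measurable_sets[OF fst_meas[OF sM(2)], of B] B mu(1) by simp
      show "emeasure (marg1 \<pi>') B = emeasure (marg1 (\<sigma> n)) B + emeasure (marg1 (R n)) B"
        using marg1_facts(4)[OF s B] marg1_facts(4)[OF \<sigma>M B] marg1_facts(4)[OF RM B] add_gen[OF X, of n] sp\<sigma>
        by simp
    qed
    then show "logint (marg1 (\<sigma> n)) \<mu> \<le> l1 - ereal (hn n * ln (hn n / mass \<mu>))"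
      using marg1_facts(3)[OF RM] massR by (simp add: l1_def)
  qed
  have B2: "\<And>n. logint (marg2 (\<sigma> n)) \<nu> \<le> l2 - ereal (hn n * ln (hn n / mass \<nu>))"
  proof -
    fix n
    have "logint (marg2 (\<sigma> n)) \<nu> \<le> logint (marg2 \<pi>') \<nu> - ereal (mass (marg2 (R n)) * ln (mass (marg2 (R n)) / mass \<nu>))"
    proof (rule logint_sub[OF marg2_facts(1)[OF s] marg2_facts(1)[OF \<sigma>M] marg2_facts(1)[OF RM] nu(2)
          marg2_facts(2)[OF s] marg2_facts(2)[OF \<sigma>M] marg2_facts(2)[OF RM]])
      fix B assume B: "B \<in> sets \<nu>"
      have X: "snd -` B \<inter> space \<pi>' \<in> sets \<pi>'"
        using measurable_sets[OF snd_meas[OF sM(2)], of B] B nu(1) by simp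
      show "emeasure (marg2 \<pi>') B = emeasure (marg2 (\<sigma> n)) B + emeasure (marg2 (R n)) B"
        using marg2_facts(4)[OF s B] marg2_facts(4)[OF \<sigma>M B] marg2_facts(4)[OF RM B] add_gen[OF X, of n] sp\<sigma>
        by simp
    qed
    then show "logint (marg2 (\<sigma> n)) \<nu> \<le> l2 - ereal (hn n * ln (hn n / mass \<nu>))"
      using marg2_facts(3)[OF RM] massR by (simp add: l2_def)
  qed
  have B3: "\<And>n. logint (\<sigma> n) (\<mu> \<Otimes>\<^sub>M \<nu>) \<le> l3 - ereal (hn n * ln (hn n / mass (\<mu> \<Otimes>\<^sub>M \<nu>)))"
  proof -
    fix n
    have "logint (\<sigma> n) (\<mu> \<Otimes>\<^sub>M \<nu>) \<le> logint \<pi>' (\<mu> \<Otimes>\<^sub>M \<nu>) - ereal (mass (R n) * ln (mass (R n) / mass (\<mu> \<Otimes>\<^sub>M \<nu>)))"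
    proof (rule logint_sub[OF sM(1) Mplus_D(1)[OF \<sigma>M] Mplus_D(1)[OF RM] fin_MN])
      show "sets \<pi>' = sets (\<mu> \<Otimes>\<^sub>M \<nu>)" "sets (\<sigma> n) = sets (\<mu> \<Otimes>\<^sub>M \<nu>)" "sets (R n) = sets (\<mu> \<Otimes>\<^sub>M \<nu>)"
        using sMN \<sigma>sets by auto
      fix X assume "X \<in> sets (\<mu> \<Otimes>\<^sub>M \<nu>)"
      then show "emeasure \<pi>' X = emeasure (\<sigma> n) X + emeasure (R n) X" using add_gen sMN by auto
    qed
    then show "logint (\<sigma> n) (\<mu> \<Otimes>\<^sub>M \<nu>) \<le> l3 - ereal (hn n * ln (hn n / mass (\<mu> \<Otimes>\<^sub>M \<nu>)))"
      using massR by (simp add: l3_def)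
  qed
  define S where "S n = \<rho> * m * (l1' - hn n * ln (hn n / mass \<mu>) - Mn n + mass \<mu>)
     + \<rho> * m * (l2' - hn n * ln (hn n / mass \<nu>) - Mn n + mass \<nu>)
     + \<epsilon> * m * (l3' - hn n * ln (hn n / mass (\<mu> \<Otimes>\<^sub>M \<nu>)) - Mn n + mass (\<mu> \<Otimes>\<^sub>M \<nu>))" for n
  define En where "En n = eint (\<sigma> n) (cost dist dist \<mu> \<nu> lam \<rho> \<epsilon> \<gamma>)" for n
  have Lbound: "\<And>n. Lfun (\<sigma> n) \<le> En n + ereal (S n)"
  proof -
    fix n
    have t1: "ereal (\<rho> * m) * (logint (marg1 (\<sigma> n)) \<mu> - ereal (Mn n) + ereal (mass \<mu>))
        \<le> ereal (\<rho> * m * (l1' - hn n * ln (hn n / mass \<mu>) - Mn n + mass \<mu>))"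
      using termbound[of "\<rho> * m" "logint (marg1 (\<sigma> n)) \<mu>" "l1' - hn n * ln (hn n / mass \<mu>)" "Mn n" "mass \<mu>"]
        B1[of n] l1' rm by simp
    have t2: "ereal (\<rho> * m) * (logint (marg2 (\<sigma> n)) \<nu> - ereal (Mn n) + ereal (mass \<nu>))
        \<le> ereal (\<rho> * m * (l2' - hn n * ln (hn n / mass \<nu>) - Mn n + mass \<nu>))"
      using termbound[of "\<rho> * m" "logint (marg2 (\<sigma> n)) \<nu>" "l2' - hn n * ln (hn n / mass \<nu>)" "Mn n" "mass \<nu>"]
        B2[of n] l2' rm by simp
    have t3: "ereal (\<epsilon> * m) * (logint (\<sigma> n) (\<mu> \<Otimes>\<^sub>M \<nu>) - ereal (Mn n) + ereal (mass (\<mu> \<Otimes>\<^sub>M \<nu>)))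
        \<le> ereal (\<epsilon> * m * (l3' - hn n * ln (hn n / mass (\<mu> \<Otimes>\<^sub>M \<nu>)) - Mn n + mass (\<mu> \<Otimes>\<^sub>M \<nu>)))"
    proof (cases "\<epsilon> = 0")
      case True then show ?thesis by (simp add: zero_ereal_def[symmetric])
    next
      case False
      then have "l3 = ereal l3'" using l3' by simp
      then show ?thesis
        using termbound[of "\<epsilon> * m" "logint (\<sigma> n) (\<mu> \<Otimes>\<^sub>M \<nu>)" "l3' - hn n * ln (hn n / mass (\<mu> \<Otimes>\<^sub>M \<nu>))" "Mn n" "mass (\<mu> \<Otimes>\<^sub>M \<nu>)"]
          B3[of n] eps mpos by (simp add: m_def)
    qed
    have "Lfun (\<sigma> n) = En n + ereal (\<rho> * m) * (logint (marg1 (\<sigma> n)) \<mu> - ereal (Mn n) + ereal (mass \<mu>))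
        + ereal (\<rho> * m) * (logint (marg2 (\<sigma> n)) \<nu> - ereal (Mn n) + ereal (mass \<nu>))
        + ereal (\<epsilon> * m) * (logint (\<sigma> n) (\<mu> \<Otimes>\<^sub>M \<nu>) - ereal (Mn n) + ereal (mass (\<mu> \<Otimes>\<^sub>M \<nu>)))"
      unfolding Lfun_expand[OF \<sigma>M] En_def massM m_def ..
    also have "\<dots> \<le> En n + ereal (\<rho> * m * (l1' - hn n * ln (hn n / mass \<mu>) - Mn n + mass \<mu>))
        + ereal (\<rho> * m * (l2' - hn n * ln (hn n / mass \<nu>) - Mn n + mass \<nu>))
        + ereal (\<epsilon> * m * (l3' - hn n * ln (hn n / mass (\<mu> \<Otimes>\<^sub>M \<nu>)) - Mn n + mass (\<mu> \<Otimes>\<^sub>M \<nu>)))"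
      by (intro add_mono t1 t2 t3 order_refl)
    also have "\<dots> = En n + ereal (S n)" by (simp add: S_def add.assoc)
    finally show "Lfun (\<sigma> n) \<le> En n + ereal (S n)" .
  qed
  have En_lim: "En \<longlonglongrightarrow> E"
    unfolding En_def[abs_def] \<sigma>_def E_def by (rule eint_restrict_conv[OF cm A_sets A_inc A_ae posfin])
  define S' where "S' = \<rho> * m * (l1' - M' + mass \<mu>) + \<rho> * m * (l2' - M' + mass \<nu>)
     + \<epsilon> * m * (l3' - M' + mass (\<mu> \<Otimes>\<^sub>M \<nu>))"
  have x1: "(\<lambda>n. hn n * ln (hn n / mass \<mu>)) \<longlonglongrightarrow> 0"
    by (rule xlnx_tendsto0[OF hn_lim hn_nonneg]) (simp add: mass_def)
  have x2: "(\<lambda>n. hn n * ln (hn n / mass \<nu>)) \<longlonglongrightarrow> 0"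
    by (rule xlnx_tendsto0[OF hn_lim hn_nonneg]) (simp add: mass_def)
  have x3: "(\<lambda>n. hn n * ln (hn n / mass (\<mu> \<Otimes>\<^sub>M \<nu>))) \<longlonglongrightarrow> 0"
    by (rule xlnx_tendsto0[OF hn_lim hn_nonneg]) (simp add: mass_def)
  have "S \<longlonglongrightarrow> \<rho> * m * (l1' - 0 - M' + mass \<mu>) + \<rho> * m * (l2' - 0 - M' + mass \<nu>)
     + \<epsilon> * m * (l3' - 0 - M' + mass (\<mu> \<Otimes>\<^sub>M \<nu>))"
    unfolding S_def[abs_def] by (intro tendsto_intros x1 x2 x3 Mn_lim)
  then have S_lim: "S \<longlonglongrightarrow> S'" by (simp add: S'_def)
  have Lpi: "Lfun \<pi>' = E + ereal S'"
  proof (cases "\<epsilon> = 0")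
    case True
    then show ?thesis unfolding Lexp S'_def l1' l2' by (simp add: zero_ereal_def[symmetric] add.assoc)
  next
    case False
    then have "l3 = ereal l3'" using l3' by simp
    then show ?thesis unfolding Lexp S'_def l1' l2' by (simp add: add.assoc)
  qed
  have lim: "(\<lambda>n. En n + ereal (S n)) \<longlonglongrightarrow> Lfun \<pi>'"
    unfolding Lpi by (rule tendsto_add_ereal_general[OF _ En_lim]) (auto intro: tendsto_ereal S_lim)
  have "eventually (\<lambda>n. En n + ereal (S n) < x) sequentially"
    by (rule order_tendstoD(2)[OF lim lt])
  then obtain n where "En n + ereal (S n) < x" by (auto simp: eventually_sequentially)
  then have "Lfun (\<sigma> n) < x" using Lbound[of n] by (rule le_less_trans[rotated])
  then show ?thesis using \<sigma>M[of n] Pfin_n[of n] by blast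
qed




lemma nn_null: "emeasure M (space M) = 0 \<Longrightarrow> (\<integral>\<^sup>+x. f x \<partial>M) = 0"
  using emeasure_0_AE[of M] by (subst nn_integral_cong_AE[where v="\<lambda>_. 0"]) auto

lemma LI_not_minf: "LI1 \<noteq> -\<infinity>" "LI2 \<noteq> -\<infinity>" "LI3 \<noteq> -\<infinity>"
  unfolding LI1_def LI2_def LI3_def
  using logint_not_minf_gen[OF marg1_facts(1)[OF gamma] mu(2) marg1_facts(2)[OF gamma]]
    logint_not_minf_gen[OF marg2_facts(1)[OF gamma] nu(2) marg2_facts(2)[OF gamma]]
    logint_not_minf_gen[OF gam(1) fin_MN] gam(2) sets_MN by auto

lemma zero_mass_logints:
  fixes \<sigma> :: "('a \<times> 'b) measure"
  assumes s: "\<sigma> \<in> Mplus" and z: "mass \<sigma> = 0"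
  shows "logint (marg1 \<sigma>) \<mu> = 0" "logint (marg2 \<sigma>) \<nu> = 0" "logint \<sigma> (\<mu> \<Otimes>\<^sub>M \<nu>) = 0"
    "emeasure \<sigma> (space \<sigma>) = 0"
proof -
  note sM = Mplus_D[OF s]
  show e: "emeasure \<sigma> (space \<sigma>) = 0" using mass_zero_iff[OF sM(1)] z by simp
  show "logint (marg1 \<sigma>) \<mu> = 0"
    by (rule logint_null[OF marg1_facts(2)[OF s]]) (use mass_zero_iff[OF marg1_facts(1)[OF s]] marg1_facts(3)[OF s] z in simp)
  show "logint (marg2 \<sigma>) \<nu> = 0"
    by (rule logint_null[OF marg2_facts(2)[OF s]]) (use mass_zero_iff[OF marg2_facts(1)[OF s]] marg2_facts(3)[OF s] z in simp)
  show "logint \<sigma> (\<mu> \<Otimes>\<^sub>M \<nu>) = 0"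
    by (rule logint_null[OF _ e]) (use sM sets_MN in simp)
qed

lemma Lfun_zero:
  fixes \<sigma> :: "('a \<times> 'b) measure"
  assumes s: "\<sigma> \<in> Mplus" and z: "mass \<sigma> = 0"
  shows "Lfun \<sigma> = ereal (\<rho> * mass \<gamma>) * (0 - ereal 0 + ereal (mass \<mu>))
     + ereal (\<rho> * mass \<gamma>) * (0 - ereal 0 + ereal (mass \<nu>))
     + ereal (\<epsilon> * mass \<gamma>) * (0 - ereal 0 + ereal (mass (\<mu> \<Otimes>\<^sub>M \<nu>)))"
  unfolding Lfun_expand[OF s] zero_mass_logints[OF s z] z eint_null[OF zero_mass_logints(4)[OF s z]] by simp

lemma Ofun_zero_fin:
  fixes \<sigma> :: "('a \<times> 'b) measure"
  assumes s: "\<sigma> \<in> Mplus" and z: "mass \<sigma> = 0"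
  shows "Ofun \<sigma> \<noteq> \<infinity>"
  unfolding Ofun_expand[OF s] zero_mass_logints[OF s z] z nn_null[OF zero_mass_logints(4)[OF s z]]
  by (simp add: zero_ereal_def[symmetric])

lemma main:
  fixes \<pi> :: "('a \<times> 'b) measure"
  assumes pi: "\<pi> \<in> Mplus" and pi_min: "\<forall>\<pi>'\<in>Mplus. Ofun \<pi> \<le> Ofun \<pi>'"
  shows "\<forall>\<pi>'\<in>Mplus. Lfun \<pi> \<le> Lfun \<pi>'"
proof (cases "mass \<gamma> = 0")
  case True
  have g0: "emeasure \<gamma> (space \<gamma>) = 0" using mass_zero_iff[OF gam(1)] True by simp
  have L0: "LI1 = 0" "LI2 = 0" "LI3 = 0"
    using zero_mass_logints[OF gamma True] by (auto simp: LI1_def LI2_def LI3_def)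
  have "cost dist dist \<mu> \<nu> lam \<rho> \<epsilon> \<gamma> = (\<lambda>z. 0)"
    by (rule ext) (simp add: cost_eq L0 c0_def P_def N_def nn_null[OF g0])
  moreover have e0: "e2ennreal (0::ereal) = 0" using e2ennreal_ereal[of 0] by (simp add: zero_ereal_def)
  ultimately have "\<And>\<sigma>. Lfun \<sigma> = 0"
    by (simp add: Lfun_def True eint_def zero_ereal_def[symmetric])
  then show ?thesis by simp
next
  case False
  then have mpos: "mass \<gamma> > 0" by (simp add: mass_def less_le)
  note piM = Mplus_D[OF pi]
  define \<sigma>0 where "\<sigma>0 = null_measure (borel :: ('a \<times> 'b) measure)"
  have s0: "\<sigma>0 \<in> Mplus" unfolding Mplus_def \<sigma>0_def
    by (auto intro!: finite_measureI simp: emeasure_null_measure)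
  have s0m: "mass \<sigma>0 = 0" by (simp add: \<sigma>0_def mass_def measure_def emeasure_null_measure)
  have Opi: "Ofun \<pi> \<noteq> \<infinity>"
    using pi_min s0 Ofun_zero_fin[OF s0 s0m] by (auto simp: top_unique[symmetric])
  have Mpi: "mass \<pi> \<ge> 0" by (simp add: mass_def)
  show ?thesis
  proof (cases "LI1 \<noteq> \<infinity> \<and> LI2 \<noteq> \<infinity> \<and> (\<epsilon> = 0 \<or> LI3 \<noteq> \<infinity>)")
    case True
    obtain g1 where g1: "LI1 = ereal g1" using True LI_not_minf(1) by (cases LI1) auto
    obtain g2 where g2: "LI2 = ereal g2" using True LI_not_minf(2) by (cases LI2) auto
    obtain g3 where g3: "\<epsilon> = 0 \<or> LI3 = ereal g3" using True LI_not_minf(3) by (cases LI3) auto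
    have Pfin: "(\<integral>\<^sup>+z. P z \<partial>\<pi>) \<noteq> \<infinity>"
    proof
      assume "(\<integral>\<^sup>+z. P z \<partial>\<pi>) = \<infinity>"
      then have "Ofun \<pi> = \<infinity>" unfolding Ofun_expand[OF pi] by simp
      then show False using Opi by simp
    qed
    note Oeq = O_eq_L[OF _ mpos g1 g2 g3]
    show ?thesis
    proof
      fix \<pi>' :: "('a \<times> 'b) measure" assume pi': "\<pi>' \<in> Mplus"
      show "Lfun \<pi> \<le> Lfun \<pi>'"
      proof (rule dense_ge)
        fix y assume "Lfun \<pi>' < y"
        from approx[OF pi' mpos g1 g2 g3 this] obtain \<sigma> where
          \<sigma>: "\<sigma> \<in> Mplus" "(\<integral>\<^sup>+z. P z \<partial>\<sigma>) \<noteq> \<infinity>" "Lfun \<sigma> < y" by blast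
        define C where "C = \<rho>*(mass \<mu> * mass \<mu> - mass \<gamma> * mass \<mu>) + \<rho>*(mass \<nu> * mass \<nu> - mass \<gamma> * mass \<nu>)
      + \<epsilon>*(mass (\<mu> \<Otimes>\<^sub>M \<nu>) * mass (\<mu> \<Otimes>\<^sub>M \<nu>) - mass \<gamma> * mass (\<mu> \<Otimes>\<^sub>M \<nu>))"
        have "Ofun \<pi> \<le> Ofun \<sigma>" using pi_min \<sigma>(1) by blast
        then have "Lfun \<pi> + ereal C \<le> Lfun \<sigma> + ereal C"
          using Oeq[OF pi Pfin] Oeq[OF \<sigma>(1,2)] unfolding C_def by simp
        then have "Lfun \<pi> \<le> Lfun \<sigma>" by (simp add: ereal_add_le_add_iff2)
        then show "Lfun \<pi> \<le> y" using \<sigma>(3) by simp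
      qed
    qed
  next
    case False
    have inf: "ereal \<rho> * LI1 + ereal \<rho> * LI2 + ereal \<epsilon> * LI3 = \<infinity>"
      using False rho eps by (auto simp: less_le)
    have zpi: "mass \<pi> = 0"
    proof (rule ccontr)
      assume "mass \<pi> \<noteq> 0"
      then have Mp: "mass \<pi> > 0" using Mpi by simp
      have "Ofun \<pi> = \<infinity>"
        using False Mp rho eps unfolding Ofun_expand[OF pi] by (auto simp: less_le)
      then show False using Opi by simp
    qed
    show ?thesis
    proof
      fix \<pi>' :: "('a \<times> 'b) measure" assume pi': "\<pi>' \<in> Mplus"
      show "Lfun \<pi> \<le> Lfun \<pi>'"
      proof (cases "mass \<pi>' = 0")
        case True
        then show ?thesis using Lfun_zero[OF pi zpi] Lfun_zero[OF pi' True] by simp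
      next
        case nz: False
        have "cost dist dist \<mu> \<nu> lam \<rho> \<epsilon> \<gamma> = (\<lambda>z. \<infinity>)"
          by (rule ext) (use inf in \<open>simp add: cost_eq add.assoc\<close>)
        moreover have "emeasure \<pi>' (space \<pi>') \<noteq> 0" using nz mass_zero_iff[OF Mplus_D(1)[OF pi']] by simp
        ultimately have "eint \<pi>' (cost dist dist \<mu> \<nu> lam \<rho> \<epsilon> \<gamma>) = \<infinity>"
          by (simp add: eint_def ennreal_mult_eq_top_iff)
        then have "Lfun \<pi>' = \<infinity>" by (simp add: Lfun_def)
        then show ?thesis by simp
      qed
    qed
  qed
qed

end


theorem proposition5:
  fixes \<mu> :: "'a::polish_space measure" and \<nu> :: "'b::polish_space measure"
    and lam :: "real \<Rightarrow> real" and \<rho> \<epsilon> :: real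
    and \<gamma> \<pi> :: "('a \<times> 'b) measure"
  assumes mu: "sets \<mu> = sets borel" "finite_measure \<mu>"
    and nu: "sets \<nu> = sets borel" "finite_measure \<nu>"
    and lam_meas: "lam \<in> borel_measurable borel"
    and rho: "\<rho> > 0" and eps: "\<epsilon> \<ge> 0"
    and gamma: "\<gamma> \<in> Mplus"
    and pi: "\<pi> \<in> Mplus"
    and pi_min: "\<forall>\<pi>'\<in>Mplus.
       GWF dist dist \<mu> \<nu> lam \<rho> \<pi> \<gamma> + ereal \<epsilon> * KL (\<pi> \<Otimes>\<^sub>M \<gamma>) ((\<mu> \<Otimes>\<^sub>M \<nu>) \<Otimes>\<^sub>M (\<mu> \<Otimes>\<^sub>M \<nu>))
       \<le> GWF dist dist \<mu> \<nu> lam \<rho> \<pi>' \<gamma> + ereal \<epsilon> * KL (\<pi>' \<Otimes>\<^sub>M \<gamma>) ((\<mu> \<Otimes>\<^sub>M \<nu>) \<Otimes>\<^sub>M (\<mu> \<Otimes>\<^sub>M \<nu>))"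
  shows "\<forall>\<pi>'\<in>Mplus.
       eint \<pi> (cost dist dist \<mu> \<nu> lam \<rho> \<epsilon> \<gamma>)
         + ereal (\<rho> * mass \<gamma>) * KL (marg1 \<pi>) \<mu>
         + ereal (\<rho> * mass \<gamma>) * KL (marg2 \<pi>) \<nu>
         + ereal (\<epsilon> * mass \<gamma>) * KL \<pi> (\<mu> \<Otimes>\<^sub>M \<nu>)
       \<le> eint \<pi>' (cost dist dist \<mu> \<nu> lam \<rho> \<epsilon> \<gamma>)
         + ereal (\<rho> * mass \<gamma>) * KL (marg1 \<pi>') \<mu>
         + ereal (\<rho> * mass \<gamma>) * KL (marg2 \<pi>') \<nu>
         + ereal (\<epsilon> * mass \<gamma>) * KL \<pi>' (\<mu> \<Otimes>\<^sub>M \<nu>)"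
proof -
  interpret gw \<mu> \<nu> lam \<rho> \<epsilon> \<gamma>
    by (rule gw.intro) (use mu nu lam_meas rho eps gamma in auto)
  show ?thesis using main[OF pi] pi_min unfolding Ofun_def Lfun_def by blast
qed

end
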